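(* Each of the two non-abelian groups of order $27$ has both a narcissistic terrace and a directed half-and-half terrace. The non-abelian group of order $39$ has a directed half-and-half terrace.
   Context: Let $G$ be a finite group of odd order $n$ and $\mathbf{a}=(a_1,\dots,a_n)$ an arrangement of its elements, with $b_i = a_i^{-1}a_{i+1}$ for $1\le i \le n-1$. Since $n$ is odd, $G$ has no involutions; $\mathbf{a}$ is a terrace if for each $x \ne e$ the elements $x$ and $x^{-1}$ together occur exactly twice in $(b_1,\dots,b_{n-1})$, and a directed terrace if the $b_i$ are pairwise distinct. A terrace $\mathbf{a}$ is half-and-half if for each set $\{g,g^{-1}\}$ with $g\ne e$ exactly one element occurrence from that set lies in $(b_1,\dots,b_{(n-1)/2})$ (and hence exactly one lies in $(b_{(n+1)/2},\dots,b_{n-1})$). A terrace is narcissistic if the sequence $(b_1,\dots,b_{n-1})$ equals its reverse. A directed half-and-half terrace is a directed terrace that is half-and-half. There is a unique non-abelian group of order 39 up to isomorphism. *)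

theory Defs
  imports "HOL-Algebra.Group"
begin

text \<open>Its quotient sequence is
b_i = a_i^{-1} a_{i+1} (1 <= i <= n-1); here lists are 0-indexed.\<close>

definition arrangement :: "'a monoid \<Rightarrow> 'a list \<Rightarrow> bool" where
  "arrangement G a \<longleftrightarrow> distinct a \<and> set a = carrier G"

definition quotients :: "'a monoid \<Rightarrow> 'a list \<Rightarrow> 'a list" where
  "quotients G a = map (\<lambda>i. inv\<^bsub>G\<^esub> (a ! i) \<otimes>\<^bsub>G\<^esub> (a ! (i + 1))) [0..<length a - 1]"

definition pair_count :: "'a monoid \<Rightarrow> 'a \<Rightarrow> 'a list \<Rightarrow> nat" where
  "pair_count G x bs = length (filter (\<lambda>b. b = x \<or> b = inv\<^bsub>G\<^esub> x) bs)"

definition terrace :: "'a monoid \<Rightarrow> 'a list \<Rightarrow> bool" where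
  "terrace G a \<longleftrightarrow> arrangement G a \<and>
     (\<forall>x\<in>carrier G. x \<noteq> \<one>\<^bsub>G\<^esub> \<longrightarrow> pair_count G x (quotients G a) = 2)"

definition directed_terrace :: "'a monoid \<Rightarrow> 'a list \<Rightarrow> bool" where
  "directed_terrace G a \<longleftrightarrow> terrace G a \<and> distinct (quotients G a)"

definition half_and_half :: "'a monoid \<Rightarrow> 'a list \<Rightarrow> bool" where
  "half_and_half G a \<longleftrightarrow> terrace G a \<and>
     (\<forall>x\<in>carrier G. x \<noteq> \<one>\<^bsub>G\<^esub> \<longrightarrow>
        pair_count G x (take ((length a - 1) div 2) (quotients G a)) = 1)"

definition narcissistic :: "'a monoid \<Rightarrow> 'a list \<Rightarrow> bool" where
  "narcissistic G a \<longleftrightarrow> terrace G a \<and> rev (quotients G a) = quotients G a"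

definition directed_hh_terrace :: "'a monoid \<Rightarrow> 'a list \<Rightarrow> bool" where
  "directed_hh_terrace G a \<longleftrightarrow> directed_terrace G a \<and> half_and_half G a"

end

theory Submission
  imports Defs "HOL-Algebra.Group_Action" "HOL-Algebra.Multiplicative_Group" "HOL-Algebra.Sylow"
begin

definition cquot :: "('m \<Rightarrow> 'm \<Rightarrow> 'm) \<Rightarrow> ('m \<Rightarrow> 'm) \<Rightarrow> 'm list \<Rightarrow> 'm list" where
  "cquot mul iv L = map (\<lambda>i. mul (iv (L ! i)) (L ! (i + 1))) [0..<length L - 1]"

definition cpc :: "('m \<Rightarrow> 'm) \<Rightarrow> 'm \<Rightarrow> 'm list \<Rightarrow> nat" where
  "cpc iv x Q = length (filter (\<lambda>b. b = x \<or> b = iv x) Q)"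

definition cterr :: "'m list \<Rightarrow> 'm \<Rightarrow> ('m \<Rightarrow> 'm) \<Rightarrow> 'm list \<Rightarrow> 'm list \<Rightarrow> bool" where
  "cterr D e iv L Q \<longleftrightarrow> distinct L \<and> set L = set D \<and> set Q \<subseteq> set D \<and>
     (\<forall>x\<in>set D. x \<noteq> e \<longrightarrow> cpc iv x Q = 2)"

definition cnarc where
  "cnarc D e iv L Q \<longleftrightarrow> cterr D e iv L Q \<and> rev Q = Q"

definition cdhh where
  "cdhh D e iv L Q \<longleftrightarrow> cterr D e iv L Q \<and> distinct Q \<and>
     (\<forall>x\<in>set D. x \<noteq> e \<longrightarrow> cpc iv x (take ((length L - 1) div 2) Q) = 1)"

definition cinvok where
  "cinvok D mul e iv \<longleftrightarrow> e \<in> set D \<and> mul e e = e \<and> (\<forall>p\<in>set D. iv p \<in> set D \<and> mul p (iv p) = e)"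

locale model_hom =
  fixes G :: "'a monoid" (structure) and D :: "'m list" and mul e iv and \<phi> :: "'m \<Rightarrow> 'a"
  assumes grp: "group G"
    and inv_ok: "cinvok D mul e iv"
    and hom: "\<And>p q. p \<in> set D \<Longrightarrow> q \<in> set D \<Longrightarrow> \<phi> (mul p q) = \<phi> p \<otimes> \<phi> q"
    and inj: "inj_on \<phi> (set D)"
    and surj: "\<phi> ` set D = carrier G"
begin

lemma phi_closed: "p \<in> set D \<Longrightarrow> \<phi> p \<in> carrier G"
  using surj by blast

lemma phi_e: "\<phi> e = \<one>"
proof -
  interpret group G by (rule grp)
  have e: "e \<in> set D" and ee: "mul e e = e" using inv_ok unfolding cinvok_def by auto
  have "\<phi> e \<otimes> \<phi> e = \<phi> e" using hom[OF e e] ee by simp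
  thus ?thesis using phi_closed[OF e]
    by (metis l_cancel_one' )
qed

lemma phi_iv: "p \<in> set D \<Longrightarrow> \<phi> (iv p) = inv (\<phi> p)"
proof -
  interpret group G by (rule grp)
  assume p: "p \<in> set D"
  have i: "iv p \<in> set D" "mul p (iv p) = e" using inv_ok p unfolding cinvok_def by auto
  have "\<phi> p \<otimes> \<phi> (iv p) = \<one>" using hom[OF p i(1)] i(2) phi_e by simp
  thus ?thesis using phi_closed[OF p] phi_closed[OF i(1)]
    by (metis inv_equality l_inv_ex r_inv m_assoc inv_closed l_one r_one)
qed

lemma iv_in: "p \<in> set D \<Longrightarrow> iv p \<in> set D"
  using inv_ok unfolding cinvok_def by auto

lemma quot:
  assumes "set L \<subseteq> set D"
  shows "quotients G (map \<phi> L) = map \<phi> (cquot mul iv L)"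
  unfolding quotients_def cquot_def
proof (rule nth_equalityI)
  fix i assume "i < length (map (\<lambda>i. inv map \<phi> L ! i \<otimes> map \<phi> L ! (i + 1)) [0..<length (map \<phi> L) - 1])"
  hence i: "i + 1 < length L" by simp
  have a: "L ! i \<in> set D" "L ! (i+1) \<in> set D" using assms i by auto
  show "map (\<lambda>i. inv map \<phi> L ! i \<otimes> map \<phi> L ! (i + 1)) [0..<length (map \<phi> L) - 1] ! i =
         map \<phi> (map (\<lambda>i. mul (iv (L ! i)) (L ! (i + 1))) [0..<length L - 1]) ! i"
  proof -
    have i': "i < length L - Suc 0" "i < length L" using i by auto
    show ?thesis using i i' a by (simp add: hom iv_in phi_iv)
  qed
qed simp

lemma pc:
  assumes "set Q \<subseteq> set D" "x \<in> set D"
  shows "pair_count G (\<phi> x) (map \<phi> Q) = cpc iv x Q"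
proof -
  have "filter (\<lambda>b. b = \<phi> x \<or> b = inv (\<phi> x)) (map \<phi> Q) = map \<phi> (filter ((\<lambda>b. b = \<phi> x \<or> b = inv (\<phi> x)) \<circ> \<phi>) Q)"
    by (simp add: filter_map)
  also have "filter ((\<lambda>b. b = \<phi> x \<or> b = inv (\<phi> x)) \<circ> \<phi>) Q = filter (\<lambda>b. b = x \<or> b = iv x) Q"
  proof (rule filter_cong[OF refl])
    fix b assume b: "b \<in> set Q"
    hence bD: "b \<in> set D" using assms by auto
    show "((\<lambda>b. b = \<phi> x \<or> b = inv (\<phi> x)) \<circ> \<phi>) b = (b = x \<or> b = iv x)"
      using inj bD assms(2) iv_in[OF assms(2)] phi_iv[OF assms(2)]
      unfolding inj_on_def by auto
  qed
  finally show ?thesis unfolding pair_count_def cpc_def by simp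
qed

lemma terr:
  assumes "cterr D e iv L Q" "cquot mul iv L = Q"
  shows "terrace G (map \<phi> L)"
proof -
  have L: "distinct L" "set L = set D" "set Q \<subseteq> set D" and c: "\<forall>x\<in>set D. x \<noteq> e \<longrightarrow> cpc iv x Q = 2"
    using assms(1) unfolding cterr_def by auto
  have "arrangement G (map \<phi> L)" unfolding arrangement_def
    using L inj surj by (simp add: distinct_map inj_on_subset)
  moreover have "\<forall>x\<in>carrier G. x \<noteq> \<one> \<longrightarrow> pair_count G x (quotients G (map \<phi> L)) = 2"
  proof (intro ballI impI)
    fix x assume x: "x \<in> carrier G" "x \<noteq> \<one>"
    then obtain p where p: "p \<in> set D" "x = \<phi> p" using surj by blast
    have "p \<noteq> e" using x p phi_e by auto
    thus "pair_count G x (quotients G (map \<phi> L)) = 2"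
      using quot[of L] L p pc[of Q p] assms(2) c by simp
  qed
  ultimately show ?thesis unfolding terrace_def by simp
qed

lemma narc:
  assumes "cnarc D e iv L Q" "cquot mul iv L = Q"
  shows "narcissistic G (map \<phi> L)"
  using assms terr[of L Q] quot[of L] unfolding cnarc_def narcissistic_def cterr_def
  by (simp add: rev_map)

lemma dhh:
  assumes "cdhh D e iv L Q" "cquot mul iv L = Q"
  shows "directed_hh_terrace G (map \<phi> L)"
proof -
  have t: "terrace G (map \<phi> L)" using assms terr unfolding cdhh_def by blast
  have L: "set L = set D" "set Q \<subseteq> set D" "distinct Q"
    and c: "\<forall>x\<in>set D. x \<noteq> e \<longrightarrow> cpc iv x (take ((length L - 1) div 2) Q) = 1"
    using assms(1) unfolding cdhh_def cterr_def by auto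
  have q: "quotients G (map \<phi> L) = map \<phi> Q" using quot[of L] L assms(2) by simp
  have "distinct (quotients G (map \<phi> L))" using q L inj
    by (simp add: distinct_map inj_on_subset)
  moreover have "\<forall>x\<in>carrier G. x \<noteq> \<one> \<longrightarrow>
        pair_count G x (take ((length (map \<phi> L) - 1) div 2) (quotients G (map \<phi> L))) = 1"
  proof (intro ballI impI)
    fix x assume x: "x \<in> carrier G" "x \<noteq> \<one>"
    then obtain p where p: "p \<in> set D" "x = \<phi> p" using surj by blast
    have "p \<noteq> e" using x p phi_e by auto
    moreover have "set (take ((length L - 1) div 2) Q) \<subseteq> set D"
      using L by (meson order_trans set_take_subset)
    ultimately show "pair_count G x (take ((length (map \<phi> L) - 1) div 2) (quotients G (map \<phi> L))) = 1"
      using q p pc[of "take ((length L - 1) div 2) Q" p] c by (simp add: take_map)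
  qed
  ultimately show ?thesis using t
    unfolding directed_hh_terrace_def directed_terrace_def half_and_half_def by simp
qed

end


definition D27 :: "(nat\<times>nat\<times>nat) list" where
  "D27 = List.product [0..<3] (List.product [0..<3] [0..<3])"

fun ry27 :: "nat \<Rightarrow> nat \<Rightarrow> nat \<Rightarrow> nat \<Rightarrow> nat\<times>nat\<times>nat \<Rightarrow> nat\<times>nat\<times>nat" where
  "ry27 a b al be (j,i,k) =
     (if j = 2 then (0, (a*i) mod 3, (k + be + b*i + al*((a*i) div 3)) mod 3)
      else (j+1, (a*i) mod 3, (k + b*i + al*((a*i) div 3)) mod 3))"

fun mxz27 :: "nat \<Rightarrow> nat\<times>nat\<times>nat \<Rightarrow> nat \<Rightarrow> nat \<Rightarrow> nat\<times>nat\<times>nat" where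
  "mxz27 al (j,i,k) i' k' = (j, (i+i') mod 3, (k + k' + al*((i+i') div 3)) mod 3)"

fun mul27 :: "nat \<Rightarrow> nat \<Rightarrow> nat \<Rightarrow> nat \<Rightarrow> nat\<times>nat\<times>nat \<Rightarrow> nat\<times>nat\<times>nat \<Rightarrow> nat\<times>nat\<times>nat" where
  "mul27 a b al be p (j,i,k) = mxz27 al ((ry27 a b al be ^^ j) p) i k"

definition D39 :: "(nat\<times>nat) list" where
  "D39 = List.product [0..<3] [0..<13]"

fun ry39 :: "nat \<Rightarrow> nat\<times>nat \<Rightarrow> nat\<times>nat" where
  "ry39 r (j,i) = ((j+1) mod 3, (i*r) mod 13)"

fun mul39 :: "nat \<Rightarrow> nat\<times>nat \<Rightarrow> nat\<times>nat \<Rightarrow> nat\<times>nat" where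
  "mul39 r p (j,i) = (case (ry39 r ^^ j) p of (j0,i0) \<Rightarrow> (j0, (i0 + i) mod 13))"

lemma set_D27: "set D27 = {..<3} \<times> {..<3} \<times> {..<3}"
  unfolding D27_def by auto

lemma set_D39: "set D39 = {..<3} \<times> {..<13}"
  unfolding D39_def by auto


definition wit27 :: "(nat\<times>nat\<times>nat\<times>nat) \<Rightarrow> ((nat\<times>nat\<times>nat) \<times> (nat\<times>nat\<times>nat) \<times> (nat\<times>nat\<times>nat)) option" where
  "wit27 t = (map_of [((0,0,0,0), ((0,1,0), (1,0,0), (2,0,0))),
    ((0,0,0,1), ((0,1,0), (1,0,0), (2,0,0))),
    ((0,0,0,2), ((0,1,0), (1,0,0), (2,0,0))),
    ((0,0,1,0), ((0,1,0), (0,2,0), (1,0,0))),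
    ((0,0,1,1), ((0,1,0), (0,2,0), (1,0,0))),
    ((0,0,1,2), ((0,1,0), (0,2,0), (1,0,0))),
    ((0,0,2,0), ((0,1,0), (0,2,0), (1,0,0))),
    ((0,0,2,1), ((0,1,0), (0,2,0), (1,0,0))),
    ((0,0,2,2), ((0,1,0), (0,2,0), (1,0,0))),
    ((0,1,0,0), ((0,1,0), (1,0,0), (2,0,0))),
    ((0,1,0,1), ((0,1,0), (1,0,0), (2,0,0))),
    ((0,1,0,2), ((0,1,0), (1,0,0), (2,0,0))),
    ((0,1,1,0), ((0,1,0), (0,2,0), (1,0,0))),
    ((0,1,1,1), ((0,1,0), (0,2,0), (1,0,0))),
    ((0,1,1,2), ((0,1,0), (0,2,0), (1,0,0))),
    ((0,1,2,0), ((0,1,0), (0,2,0), (1,0,0))),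
    ((0,1,2,1), ((0,1,0), (0,2,0), (1,0,0))),
    ((0,1,2,2), ((0,1,0), (0,2,0), (1,0,0))),
    ((0,2,0,0), ((0,1,0), (1,0,0), (2,0,0))),
    ((0,2,0,1), ((0,1,0), (1,0,0), (2,0,0))),
    ((0,2,0,2), ((0,1,0), (1,0,0), (2,0,0))),
    ((0,2,1,0), ((0,1,0), (0,2,0), (1,0,0))),
    ((0,2,1,1), ((0,1,0), (0,2,0), (1,0,0))),
    ((0,2,1,2), ((0,1,0), (0,2,0), (1,0,0))),
    ((0,2,2,0), ((0,1,0), (0,2,0), (1,0,0))),
    ((0,2,2,1), ((0,1,0), (0,2,0), (1,0,0))),
    ((0,2,2,2), ((0,1,0), (0,2,0), (1,0,0))),
    ((2,0,0,0), ((0,1,0), (1,0,0), (2,0,0))),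
    ((2,0,0,1), ((0,1,0), (1,0,0), (2,0,0))),
    ((2,0,0,2), ((0,1,0), (1,0,0), (2,0,0))),
    ((2,0,1,0), ((0,1,0), (0,1,0), (2,0,0))),
    ((2,0,1,1), ((0,1,0), (0,1,0), (2,0,0))),
    ((2,0,1,2), ((0,1,0), (0,1,0), (2,0,0))),
    ((2,0,2,0), ((0,1,0), (0,1,0), (2,0,0))),
    ((2,0,2,1), ((0,1,0), (0,1,0), (2,0,0))),
    ((2,0,2,2), ((0,1,0), (0,1,0), (2,0,0))),
    ((2,1,0,0), ((0,1,0), (1,0,0), (2,0,0))),
    ((2,1,0,1), ((0,1,0), (1,0,0), (2,0,0))),
    ((2,1,0,2), ((0,1,0), (1,0,0), (2,0,0))),
    ((2,1,1,0), ((0,1,0), (0,1,0), (2,0,0))),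
    ((2,1,1,1), ((0,1,0), (0,1,0), (2,0,0))),
    ((2,1,1,2), ((0,1,0), (0,1,0), (2,0,0))),
    ((2,1,2,0), ((0,1,0), (0,1,0), (2,0,0))),
    ((2,1,2,1), ((0,1,0), (0,1,0), (2,0,0))),
    ((2,1,2,2), ((0,1,0), (0,1,0), (2,0,0))),
    ((2,2,0,0), ((0,1,0), (1,0,0), (2,0,0))),
    ((2,2,0,1), ((0,1,0), (1,0,0), (2,0,0))),
    ((2,2,0,2), ((0,1,0), (1,0,0), (2,0,0))),
    ((2,2,1,0), ((0,1,0), (0,1,0), (2,0,0))),
    ((2,2,1,1), ((0,1,0), (0,1,0), (2,0,0))),
    ((2,2,1,2), ((0,1,0), (0,1,0), (2,0,0))),
    ((2,2,2,0), ((0,1,0), (0,1,0), (2,0,0))),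
    ((2,2,2,1), ((0,1,0), (0,1,0), (2,0,0))),
    ((2,2,2,2), ((0,1,0), (0,1,0), (2,0,0)))] t)"

definition dat27 :: "(nat\<times>nat\<times>nat\<times>nat) \<Rightarrow> (((nat\<times>nat\<times>nat)\<times>(nat\<times>nat\<times>nat)) list \<times> (nat\<times>nat\<times>nat) list \<times> (nat\<times>nat\<times>nat) list \<times> (nat\<times>nat\<times>nat) list \<times> (nat\<times>nat\<times>nat) list) option" where
  "dat27 t = (map_of [((1,1,0,0), ([((0,0,0),(0,0,0)), ((0,0,1),(0,0,2)), ((0,0,2),(0,0,1)), ((0,1,0),(0,2,0)), ((0,1,1),(0,2,2)), ((0,1,2),(0,2,1)), ((0,2,0),(0,1,0)), ((0,2,1),(0,1,2)), ((0,2,2),(0,1,1)), ((1,0,0),(2,0,0)), ((1,0,1),(2,0,2)), ((1,0,2),(2,0,1)), ((1,1,0),(2,2,1)), ((1,1,1),(2,2,0)), ((1,1,2),(2,2,2)), ((1,2,0),(2,1,2)), ((1,2,1),(2,1,1)), ((1,2,2),(2,1,0)), ((2,0,0),(1,0,0)), ((2,0,1),(1,0,2)), ((2,0,2),(1,0,1)), ((2,1,0),(1,2,2)), ((2,1,1),(1,2,1)), ((2,1,2),(1,2,0)), ((2,2,0),(1,1,1)), ((2,2,1),(1,1,0)), ((2,2,2),(1,1,2))],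
     [(0,0,0), (1,2,0), (0,2,1), (2,2,1), (2,0,1), (2,1,0), (2,0,2), (1,1,2), (2,1,2), (1,0,2), (0,2,2), (0,2,0), (1,1,0), (0,0,1), (2,2,0), (0,1,0), (0,1,1), (2,0,0), (1,2,1), (2,2,2), (1,0,0), (1,2,2), (1,0,1), (1,1,1), (0,1,2), (2,1,1), (0,0,2)],
     [(1,2,0), (2,0,0), (2,0,2), (0,1,0), (0,1,2), (0,2,2), (2,1,0), (1,0,2), (2,2,1), (2,2,0), (0,0,1), (1,2,1), (2,2,2), (2,2,2), (1,2,1), (0,0,1), (2,2,0), (2,2,1), (1,0,2), (2,1,0), (0,2,2), (0,1,2), (0,1,0), (2,0,2), (2,0,0), (1,2,0)],
     [(0,0,0), (1,2,0), (0,2,1), (2,2,1), (2,0,1), (2,1,0), (2,1,1), (1,0,0), (2,1,2), (0,1,2), (1,0,1), (0,1,1), (1,2,2), (1,1,1), (0,0,2), (0,2,2), (1,0,2), (2,0,0), (2,0,2), (1,1,0), (1,2,1), (2,2,0), (1,1,2), (0,2,0), (2,2,2), (0,1,0), (0,0,1)],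
     [(1,2,0), (2,0,0), (2,0,2), (0,1,0), (0,1,2), (0,0,1), (2,2,0), (1,1,2), (1,0,2), (1,2,1), (2,1,0), (1,1,0), (0,2,2), (2,2,2), (0,2,0), (1,1,1), (1,0,1), (0,0,2), (2,1,1), (0,1,1), (1,0,0), (2,2,1), (2,1,2), (2,0,1), (1,2,2), (0,2,1)])),
   ((1,1,0,1), ([((0,0,0),(0,0,0)), ((0,0,1),(0,0,2)), ((0,0,2),(0,0,1)), ((0,1,0),(0,2,0)), ((0,1,1),(0,2,2)), ((0,1,2),(0,2,1)), ((0,2,0),(0,1,0)), ((0,2,1),(0,1,2)), ((0,2,2),(0,1,1)), ((1,0,0),(2,0,2)), ((1,0,1),(2,0,1)), ((1,0,2),(2,0,0)), ((1,1,0),(2,2,0)), ((1,1,1),(2,2,2)), ((1,1,2),(2,2,1)), ((1,2,0),(2,1,1)), ((1,2,1),(2,1,0)), ((1,2,2),(2,1,2)), ((2,0,0),(1,0,2)), ((2,0,1),(1,0,1)), ((2,0,2),(1,0,0)), ((2,1,0),(1,2,1)), ((2,1,1),(1,2,0)), ((2,1,2),(1,2,2)), ((2,2,0),(1,1,0)), ((2,2,1),(1,1,2)), ((2,2,2),(1,1,1))],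
     [(0,0,0), (1,2,0), (0,2,2), (2,2,2), (2,0,2), (2,1,1), (0,0,2), (2,1,2), (1,0,0), (1,2,2), (2,0,1), (0,1,0), (1,1,2), (1,1,0), (1,1,1), (2,1,0), (0,2,0), (1,0,2), (1,2,1), (0,1,1), (2,2,0), (0,1,2), (0,2,1), (0,0,1), (2,0,0), (1,0,1), (2,2,1)],
     [(1,2,0), (2,0,0), (2,0,2), (0,1,0), (0,1,2), (1,2,2), (2,1,0), (2,2,1), (0,2,2), (1,1,0), (1,1,1), (1,0,1), (0,0,1), (0,0,1), (1,0,1), (1,1,1), (1,1,0), (0,2,2), (2,2,1), (2,1,0), (1,2,2), (0,1,2), (0,1,0), (2,0,2), (2,0,0), (1,2,0)],
     [(0,0,0), (1,2,0), (0,2,2), (2,2,2), (2,0,2), (2,1,1), (2,1,2), (0,0,2), (1,1,0), (2,0,0), (0,1,1), (2,0,1), (2,2,0), (0,2,1), (0,2,0), (1,0,1), (1,2,2), (1,0,0), (0,1,2), (1,1,2), (2,1,0), (1,0,2), (0,1,0), (2,2,1), (1,2,1), (1,1,1), (0,0,1)],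
     [(1,2,0), (2,0,0), (2,0,2), (0,1,0), (0,1,2), (0,0,1), (1,2,1), (1,1,1), (1,2,2), (1,1,0), (2,2,1), (0,2,2), (1,0,1), (0,0,2), (1,1,2), (0,2,1), (0,1,1), (2,1,1), (1,0,2), (1,0,0), (2,2,2), (2,1,0), (2,1,2), (2,0,1), (0,2,0), (2,2,0)])),
   ((1,1,0,2), ([((0,0,0),(0,0,0)), ((0,0,1),(0,0,2)), ((0,0,2),(0,0,1)), ((0,1,0),(0,2,0)), ((0,1,1),(0,2,2)), ((0,1,2),(0,2,1)), ((0,2,0),(0,1,0)), ((0,2,1),(0,1,2)), ((0,2,2),(0,1,1)), ((1,0,0),(2,0,1)), ((1,0,1),(2,0,0)), ((1,0,2),(2,0,2)), ((1,1,0),(2,2,2)), ((1,1,1),(2,2,1)), ((1,1,2),(2,2,0)), ((1,2,0),(2,1,0)), ((1,2,1),(2,1,2)), ((1,2,2),(2,1,1)), ((2,0,0),(1,0,1)), ((2,0,1),(1,0,0)), ((2,0,2),(1,0,2)), ((2,1,0),(1,2,0)), ((2,1,1),(1,2,2)), ((2,1,2),(1,2,1)), ((2,2,0),(1,1,2)), ((2,2,1),(1,1,1)), ((2,2,2),(1,1,0))],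
     [(0,0,0), (2,2,0), (2,0,0), (2,0,2), (2,1,0), (0,1,1), (0,2,0), (1,0,0), (2,2,2), (1,2,1), (0,1,0), (1,0,1), (2,0,1), (0,2,1), (1,1,1), (2,1,2), (0,0,2), (2,2,1), (1,2,0), (2,1,1), (0,2,2), (0,0,1), (1,0,2), (1,1,0), (1,1,2), (1,2,2), (0,1,2)],
     [(2,2,0), (0,1,0), (0,0,2), (0,1,1), (1,0,1), (0,1,2), (1,1,1), (1,2,2), (2,0,2), (2,2,2), (1,2,0), (1,0,0), (1,2,1), (1,2,1), (1,0,0), (1,2,0), (2,2,2), (2,0,2), (1,2,2), (1,1,1), (0,1,2), (1,0,1), (0,1,1), (0,0,2), (0,1,0), (2,2,0)],
     [(0,0,0), (1,2,0), (0,2,0), (2,2,0), (2,0,0), (2,1,2), (2,1,0), (0,0,1), (1,1,2), (2,0,2), (0,1,1), (2,1,1), (1,0,2), (1,2,1), (0,1,2), (1,2,2), (2,2,1), (1,0,0), (2,0,1), (2,2,2), (1,1,1), (1,0,1), (0,1,0), (1,1,0), (0,2,2), (0,2,1), (0,0,2)],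
     [(1,2,0), (2,0,0), (2,0,2), (0,1,0), (0,1,2), (0,0,1), (1,2,1), (1,1,1), (1,2,2), (1,1,0), (2,0,1), (2,2,0), (0,2,2), (2,2,1), (1,1,2), (1,0,0), (2,1,2), (1,0,1), (0,2,1), (2,2,2), (0,2,0), (2,1,0), (1,0,2), (2,1,1), (0,0,2), (0,1,1)])),
   ((1,1,1,0), ([((0,0,0),(0,0,0)), ((0,0,1),(0,0,2)), ((0,0,2),(0,0,1)), ((0,1,0),(0,2,2)), ((0,1,1),(0,2,1)), ((0,1,2),(0,2,0)), ((0,2,0),(0,1,2)), ((0,2,1),(0,1,1)), ((0,2,2),(0,1,0)), ((1,0,0),(2,0,0)), ((1,0,1),(2,0,2)), ((1,0,2),(2,0,1)), ((1,1,0),(2,2,0)), ((1,1,1),(2,2,2)), ((1,1,2),(2,2,1)), ((1,2,0),(2,1,1)), ((1,2,1),(2,1,0)), ((1,2,2),(2,1,2)), ((2,0,0),(1,0,0)), ((2,0,1),(1,0,2)), ((2,0,2),(1,0,1)), ((2,1,0),(1,2,1)), ((2,1,1),(1,2,0)), ((2,1,2),(1,2,2)), ((2,2,0),(1,1,0)), ((2,2,1),(1,1,2)), ((2,2,2),(1,1,1))],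
     [(0,0,0), (1,2,0), (0,2,1), (2,2,1), (2,0,2), (2,1,1), (0,0,2), (2,1,2), (0,1,2), (1,2,1), (2,0,1), (1,2,2), (1,1,1), (1,1,0), (1,1,2), (1,0,1), (0,2,2), (1,0,2), (2,1,0), (0,1,0), (2,2,2), (0,1,1), (0,2,0), (0,0,1), (2,0,0), (1,0,0), (2,2,0)],
     [(1,2,0), (2,0,0), (2,0,2), (0,1,0), (0,1,2), (1,2,2), (2,1,0), (1,0,2), (1,1,1), (1,1,0), (2,2,1), (0,2,1), (0,0,2), (0,0,2), (0,2,1), (2,2,1), (1,1,0), (1,1,1), (1,0,2), (2,1,0), (1,2,2), (0,1,2), (0,1,0), (2,0,2), (2,0,0), (1,2,0)],
     [(0,0,0), (1,2,0), (0,2,1), (2,2,1), (2,0,2), (2,1,1), (2,1,2), (0,0,2), (1,1,0), (2,1,0), (0,2,0), (2,0,1), (2,2,2), (1,1,1), (1,0,2), (0,1,0), (1,0,1), (0,1,1), (1,1,2), (2,2,0), (1,2,2), (1,2,1), (1,0,0), (0,2,2), (0,1,2), (2,0,0), (0,0,1)],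
     [(1,2,0), (2,0,0), (2,0,2), (0,1,0), (0,1,2), (0,0,1), (1,2,1), (1,1,1), (1,0,2), (1,1,2), (2,1,2), (0,2,1), (2,2,0), (0,2,0), (2,1,1), (1,2,2), (2,1,0), (1,0,0), (1,1,0), (2,0,1), (0,0,2), (0,1,1), (2,2,2), (0,2,2), (2,2,1), (1,0,1)])),
   ((1,1,1,1), ([((0,0,0),(0,0,0)), ((0,0,1),(0,0,2)), ((0,0,2),(0,0,1)), ((0,1,0),(0,2,2)), ((0,1,1),(0,2,1)), ((0,1,2),(0,2,0)), ((0,2,0),(0,1,2)), ((0,2,1),(0,1,1)), ((0,2,2),(0,1,0)), ((1,0,0),(2,0,2)), ((1,0,1),(2,0,1)), ((1,0,2),(2,0,0)), ((1,1,0),(2,2,2)), ((1,1,1),(2,2,1)), ((1,1,2),(2,2,0)), ((1,2,0),(2,1,0)), ((1,2,1),(2,1,2)), ((1,2,2),(2,1,1)), ((2,0,0),(1,0,2)), ((2,0,1),(1,0,1)), ((2,0,2),(1,0,0)), ((2,1,0),(1,2,0)), ((2,1,1),(1,2,2)), ((2,1,2),(1,2,1)), ((2,2,0),(1,1,2)), ((2,2,1),(1,1,1)), ((2,2,2),(1,1,0))],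
     [(0,0,0), (1,2,0), (0,2,2), (2,2,2), (2,0,0), (2,1,2), (1,0,1), (2,1,0), (0,1,0), (1,2,1), (0,0,2), (0,0,1), (0,1,2), (2,2,0), (1,0,2), (1,1,0), (1,1,2), (0,2,0), (1,0,0), (2,0,1), (0,1,1), (2,0,2), (2,1,1), (2,2,1), (1,2,2), (0,2,1), (1,1,1)],
     [(1,2,0), (2,0,0), (2,0,2), (0,1,0), (0,1,2), (2,2,1), (1,1,2), (1,0,1), (1,1,0), (2,1,1), (0,0,2), (0,1,1), (2,1,2), (2,1,2), (0,1,1), (0,0,2), (2,1,1), (1,1,0), (1,0,1), (1,1,2), (2,2,1), (0,1,2), (0,1,0), (2,0,2), (2,0,0), (1,2,0)],
     [(0,0,0), (1,2,0), (0,2,2), (2,2,2), (2,0,0), (2,1,2), (2,1,0), (0,0,1), (1,1,2), (2,1,1), (0,2,0), (1,0,2), (1,1,0), (2,0,1), (1,1,1), (1,0,0), (0,2,1), (1,2,2), (0,1,0), (2,0,2), (2,2,1), (1,2,1), (2,2,0), (1,0,1), (0,1,2), (0,1,1), (0,0,2)],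
     [(1,2,0), (2,0,0), (2,0,2), (0,1,0), (0,1,2), (0,0,1), (1,2,1), (1,1,1), (1,0,1), (1,1,0), (1,1,2), (0,1,1), (1,2,2), (2,1,2), (0,2,1), (2,2,0), (1,0,2), (2,2,1), (2,2,2), (0,2,2), (2,0,1), (1,0,0), (2,1,1), (2,1,0), (0,0,2), (0,2,0)])),
   ((1,1,1,2), ([((0,0,0),(0,0,0)), ((0,0,1),(0,0,2)), ((0,0,2),(0,0,1)), ((0,1,0),(0,2,2)), ((0,1,1),(0,2,1)), ((0,1,2),(0,2,0)), ((0,2,0),(0,1,2)), ((0,2,1),(0,1,1)), ((0,2,2),(0,1,0)), ((1,0,0),(2,0,1)), ((1,0,1),(2,0,0)), ((1,0,2),(2,0,2)), ((1,1,0),(2,2,1)), ((1,1,1),(2,2,0)), ((1,1,2),(2,2,2)), ((1,2,0),(2,1,2)), ((1,2,1),(2,1,1)), ((1,2,2),(2,1,0)), ((2,0,0),(1,0,1)), ((2,0,1),(1,0,0)), ((2,0,2),(1,0,2)), ((2,1,0),(1,2,2)), ((2,1,1),(1,2,1)), ((2,1,2),(1,2,0)), ((2,2,0),(1,1,1)), ((2,2,1),(1,1,0)), ((2,2,2),(1,1,2))],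
     [(0,0,0), (0,1,1), (1,0,2), (1,0,0), (0,0,2), (1,1,0), (2,2,0), (1,2,1), (2,0,1), (0,2,1), (1,1,1), (2,1,1), (2,2,1), (2,1,2), (2,0,0), (2,1,0), (0,1,2), (1,0,1), (2,2,2), (0,0,1), (2,0,2), (0,1,0), (1,2,2), (0,2,2), (0,2,0), (1,1,2), (1,2,0)],
     [(0,1,1), (1,2,2), (0,0,1), (2,0,0), (1,1,1), (1,1,2), (2,0,1), (1,1,0), (1,2,1), (1,2,0), (1,0,2), (0,1,0), (0,2,0), (0,2,0), (0,1,0), (1,0,2), (1,2,0), (1,2,1), (1,1,0), (2,0,1), (1,1,2), (1,1,1), (2,0,0), (0,0,1), (1,2,2), (0,1,1)],
     [(0,0,0), (1,2,0), (0,2,0), (2,2,0), (2,0,1), (2,1,0), (2,1,1), (1,0,0), (2,1,2), (0,1,2), (1,0,2), (0,1,1), (1,2,2), (1,1,1), (2,0,2), (2,2,2), (1,0,1), (0,2,2), (2,2,1), (2,0,0), (0,1,0), (1,1,0), (1,1,2), (0,0,2), (0,2,1), (1,2,1), (0,0,1)],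
     [(1,2,0), (2,0,0), (2,0,2), (0,1,0), (0,1,2), (0,0,1), (2,2,0), (1,1,2), (1,0,0), (1,2,1), (2,1,0), (1,1,0), (0,2,1), (1,2,2), (0,2,0), (2,1,1), (2,2,2), (2,0,1), (0,1,1), (1,1,1), (1,0,2), (0,0,2), (2,2,1), (0,2,2), (1,0,1), (2,1,2)])),
   ((1,1,2,0), ([((0,0,0),(0,0,0)), ((0,0,1),(0,0,2)), ((0,0,2),(0,0,1)), ((0,1,0),(0,2,1)), ((0,1,1),(0,2,0)), ((0,1,2),(0,2,2)), ((0,2,0),(0,1,1)), ((0,2,1),(0,1,0)), ((0,2,2),(0,1,2)), ((1,0,0),(2,0,0)), ((1,0,1),(2,0,2)), ((1,0,2),(2,0,1)), ((1,1,0),(2,2,2)), ((1,1,1),(2,2,1)), ((1,1,2),(2,2,0)), ((1,2,0),(2,1,0)), ((1,2,1),(2,1,2)), ((1,2,2),(2,1,1)), ((2,0,0),(1,0,0)), ((2,0,1),(1,0,2)), ((2,0,2),(1,0,1)), ((2,1,0),(1,2,0)), ((2,1,1),(1,2,2)), ((2,1,2),(1,2,1)), ((2,2,0),(1,1,2)), ((2,2,1),(1,1,1)), ((2,2,2),(1,1,0))],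
     [(0,0,0), (2,1,1), (0,2,0), (1,2,2), (2,1,0), (2,0,1), (0,2,2), (2,2,2), (2,1,2), (1,0,0), (1,2,0), (2,2,1), (1,1,0), (1,1,1), (1,1,2), (0,0,2), (1,0,1), (1,2,1), (0,1,1), (0,0,1), (2,0,0), (0,2,1), (0,1,2), (1,0,2), (2,0,2), (0,1,0), (2,2,0)],
     [(2,1,1), (1,1,1), (1,0,0), (1,2,0), (0,2,2), (1,2,1), (2,0,2), (0,2,1), (2,2,0), (0,2,0), (1,0,2), (2,2,2), (0,0,1), (0,0,1), (2,2,2), (1,0,2), (0,2,0), (2,2,0), (0,2,1), (2,0,2), (1,2,1), (0,2,2), (1,2,0), (1,0,0), (1,1,1), (2,1,1)],
     [(0,0,0), (1,2,0), (0,2,1), (2,2,1), (2,0,0), (2,1,2), (2,1,0), (0,0,1), (1,1,2), (2,0,1), (0,1,1), (2,1,1), (1,0,2), (1,1,0), (1,0,1), (0,2,2), (0,1,2), (1,2,2), (1,2,1), (2,2,2), (1,1,1), (1,0,0), (0,1,0), (2,2,0), (0,2,0), (2,0,2), (0,0,2)],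
     [(1,2,0), (2,0,0), (2,0,2), (0,1,0), (0,1,2), (0,0,1), (1,2,1), (1,1,1), (1,2,2), (1,1,0), (2,0,1), (2,2,0), (0,1,1), (0,2,2), (2,2,1), (0,2,1), (1,1,2), (0,0,2), (1,0,2), (2,2,2), (0,2,0), (2,1,0), (2,1,1), (1,0,1), (2,1,2), (1,0,0)])),
   ((1,1,2,1), ([((0,0,0),(0,0,0)), ((0,0,1),(0,0,2)), ((0,0,2),(0,0,1)), ((0,1,0),(0,2,1)), ((0,1,1),(0,2,0)), ((0,1,2),(0,2,2)), ((0,2,0),(0,1,1)), ((0,2,1),(0,1,0)), ((0,2,2),(0,1,2)), ((1,0,0),(2,0,2)), ((1,0,1),(2,0,1)), ((1,0,2),(2,0,0)), ((1,1,0),(2,2,1)), ((1,1,1),(2,2,0)), ((1,1,2),(2,2,2)), ((1,2,0),(2,1,2)), ((1,2,1),(2,1,1)), ((1,2,2),(2,1,0)), ((2,0,0),(1,0,2)), ((2,0,1),(1,0,1)), ((2,0,2),(1,0,0)), ((2,1,0),(1,2,2)), ((2,1,1),(1,2,1)), ((2,1,2),(1,2,0)), ((2,2,0),(1,1,1)), ((2,2,1),(1,1,0)), ((2,2,2),(1,1,2))],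
     [(0,0,0), (2,2,0), (2,0,2), (2,0,1), (2,1,2), (0,1,2), (1,1,0), (0,2,1), (1,1,1), (0,0,2), (1,0,1), (0,2,0), (0,0,1), (2,1,0), (1,2,2), (1,0,0), (0,2,2), (1,2,0), (0,1,0), (1,0,2), (0,1,1), (1,1,2), (2,1,1), (2,2,2), (2,2,1), (2,0,0), (1,2,1)],
     [(2,2,0), (0,1,0), (0,0,2), (0,1,1), (1,0,1), (1,0,0), (2,1,1), (1,2,2), (2,2,2), (1,0,2), (2,2,1), (0,1,2), (2,1,2), (2,1,2), (0,1,2), (2,2,1), (1,0,2), (2,2,2), (1,2,2), (2,1,1), (1,0,0), (1,0,1), (0,1,1), (0,0,2), (0,1,0), (2,2,0)],
     [(0,0,0), (1,2,0), (0,2,2), (2,2,2), (2,0,1), (2,1,0), (2,1,1), (1,0,0), (2,1,2), (0,1,2), (2,2,1), (1,1,0), (1,0,2), (2,2,0), (0,1,1), (0,0,2), (1,0,1), (0,2,1), (0,2,0), (2,0,2), (1,1,1), (1,2,2), (1,1,2), (0,1,0), (1,2,1), (2,0,0), (0,0,1)],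
     [(1,2,0), (2,0,0), (2,0,2), (0,1,0), (0,1,2), (0,0,1), (2,2,0), (1,1,2), (1,0,1), (2,1,0), (2,2,1), (0,2,0), (1,2,1), (1,2,2), (0,2,2), (1,0,2), (2,2,2), (0,0,2), (2,1,2), (2,1,1), (0,1,1), (0,2,1), (2,0,1), (1,1,0), (1,1,1), (1,0,0)])),
   ((1,1,2,2), ([((0,0,0),(0,0,0)), ((0,0,1),(0,0,2)), ((0,0,2),(0,0,1)), ((0,1,0),(0,2,1)), ((0,1,1),(0,2,0)), ((0,1,2),(0,2,2)), ((0,2,0),(0,1,1)), ((0,2,1),(0,1,0)), ((0,2,2),(0,1,2)), ((1,0,0),(2,0,1)), ((1,0,1),(2,0,0)), ((1,0,2),(2,0,2)), ((1,1,0),(2,2,0)), ((1,1,1),(2,2,2)), ((1,1,2),(2,2,1)), ((1,2,0),(2,1,1)), ((1,2,1),(2,1,0)), ((1,2,2),(2,1,2)), ((2,0,0),(1,0,1)), ((2,0,1),(1,0,0)), ((2,0,2),(1,0,2)), ((2,1,0),(1,2,1)), ((2,1,1),(1,2,0)), ((2,1,2),(1,2,2)), ((2,2,0),(1,1,0)), ((2,2,1),(1,1,2)), ((2,2,2),(1,1,1))],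
     [(0,0,0), (2,2,0), (2,0,2), (2,0,1), (2,1,2), (0,1,0), (2,1,0), (1,0,1), (2,2,2), (0,2,2), (1,1,2), (2,2,1), (0,1,1), (0,2,0), (0,0,1), (1,2,1), (2,0,0), (0,2,1), (1,2,2), (2,1,1), (1,0,2), (0,0,2), (1,0,0), (1,1,1), (1,1,0), (1,2,0), (0,1,2)],
     [(2,2,0), (0,1,0), (0,0,2), (0,1,1), (1,0,1), (2,0,1), (2,2,1), (1,2,1), (1,0,2), (1,2,2), (1,1,1), (1,2,0), (0,1,2), (0,1,2), (1,2,0), (1,1,1), (1,2,2), (1,0,2), (1,2,1), (2,2,1), (2,0,1), (1,0,1), (0,1,1), (0,0,2), (0,1,0), (2,2,0)],
     [(0,0,0), (2,2,0), (2,0,2), (2,0,1), (2,1,2), (0,1,0), (1,0,0), (0,2,0), (1,2,1), (0,1,2), (1,0,1), (1,2,0), (0,0,2), (1,0,2), (1,2,2), (0,2,1), (1,1,0), (2,2,1), (2,1,1), (0,2,2), (2,0,0), (1,1,1), (1,1,2), (0,1,1), (2,1,0), (2,2,2), (0,0,1)],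
     [(2,2,0), (0,1,0), (0,0,2), (0,1,1), (1,0,1), (1,2,0), (2,2,1), (1,0,2), (2,2,2), (1,2,2), (0,2,2), (2,1,0), (1,0,0), (0,2,0), (2,0,2), (1,2,1), (1,1,0), (0,2,1), (1,1,1), (2,1,1), (2,1,2), (0,0,1), (2,0,1), (2,0,0), (0,1,2), (1,1,2)])),
   ((1,2,0,0), ([((0,0,0),(0,0,0)), ((0,0,1),(0,0,2)), ((0,0,2),(0,0,1)), ((0,1,0),(0,2,0)), ((0,1,1),(0,2,2)), ((0,1,2),(0,2,1)), ((0,2,0),(0,1,0)), ((0,2,1),(0,1,2)), ((0,2,2),(0,1,1)), ((1,0,0),(2,0,0)), ((1,0,1),(2,0,2)), ((1,0,2),(2,0,1)), ((1,1,0),(2,2,2)), ((1,1,1),(2,2,1)), ((1,1,2),(2,2,0)), ((1,2,0),(2,1,1)), ((1,2,1),(2,1,0)), ((1,2,2),(2,1,2)), ((2,0,0),(1,0,0)), ((2,0,1),(1,0,2)), ((2,0,2),(1,0,1)), ((2,1,0),(1,2,1)), ((2,1,1),(1,2,0)), ((2,1,2),(1,2,2)), ((2,2,0),(1,1,2)), ((2,2,1),(1,1,1)), ((2,2,2),(1,1,0))],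
     [(0,0,0), (2,2,0), (2,0,0), (2,0,2), (2,1,0), (0,1,0), (2,1,2), (1,0,2), (2,2,1), (0,2,2), (0,0,1), (1,2,2), (2,0,1), (0,2,1), (1,1,2), (2,2,2), (0,1,1), (0,2,0), (1,2,1), (2,1,1), (1,0,1), (0,0,2), (1,0,0), (1,1,1), (1,1,0), (1,2,0), (0,1,2)],
     [(2,2,0), (0,1,0), (0,0,2), (0,1,1), (1,0,1), (2,0,1), (2,2,2), (1,2,2), (1,0,0), (0,1,2), (1,2,1), (1,1,1), (1,2,0), (1,2,0), (1,1,1), (1,2,1), (0,1,2), (1,0,0), (1,2,2), (2,2,2), (2,0,1), (1,0,1), (0,1,1), (0,0,2), (0,1,0), (2,2,0)],
     [(0,0,0), (1,2,0), (0,2,2), (2,2,0), (2,0,0), (2,1,2), (2,1,0), (1,0,1), (2,1,1), (0,1,2), (1,0,2), (0,1,1), (1,2,1), (1,1,0), (2,0,1), (1,2,2), (1,1,2), (1,0,0), (1,1,1), (0,1,0), (2,2,2), (0,2,1), (0,2,0), (2,0,2), (0,0,2), (2,2,1), (0,0,1)],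
     [(1,2,0), (2,0,0), (2,0,2), (0,1,0), (0,1,2), (0,0,1), (2,2,0), (1,1,0), (1,0,2), (1,2,1), (2,1,2), (1,1,1), (0,2,2), (1,2,2), (2,2,1), (0,2,0), (0,2,1), (0,1,1), (2,0,1), (2,1,1), (1,0,1), (0,0,2), (2,1,0), (1,0,0), (2,2,2), (1,1,2)])),
   ((1,2,0,1), ([((0,0,0),(0,0,0)), ((0,0,1),(0,0,2)), ((0,0,2),(0,0,1)), ((0,1,0),(0,2,0)), ((0,1,1),(0,2,2)), ((0,1,2),(0,2,1)), ((0,2,0),(0,1,0)), ((0,2,1),(0,1,2)), ((0,2,2),(0,1,1)), ((1,0,0),(2,0,2)), ((1,0,1),(2,0,1)), ((1,0,2),(2,0,0)), ((1,1,0),(2,2,1)), ((1,1,1),(2,2,0)), ((1,1,2),(2,2,2)), ((1,2,0),(2,1,0)), ((1,2,1),(2,1,2)), ((1,2,2),(2,1,1)), ((2,0,0),(1,0,2)), ((2,0,1),(1,0,1)), ((2,0,2),(1,0,0)), ((2,1,0),(1,2,0)), ((2,1,1),(1,2,2)), ((2,1,2),(1,2,1)), ((2,2,0),(1,1,1)), ((2,2,1),(1,1,0)), ((2,2,2),(1,1,2))],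
     [(0,0,0), (2,2,0), (2,0,0), (2,0,2), (2,1,0), (0,1,1), (1,0,0), (0,1,0), (1,0,1), (2,0,1), (1,0,2), (1,1,1), (0,0,1), (1,1,0), (2,2,1), (1,1,2), (1,2,1), (0,2,1), (1,2,2), (2,1,2), (1,2,0), (2,1,1), (0,1,2), (0,2,0), (0,2,2), (0,0,2), (2,2,2)],
     [(2,2,0), (0,1,0), (0,0,2), (0,1,1), (1,0,1), (1,2,0), (2,1,2), (1,2,2), (1,0,0), (2,0,0), (0,1,2), (2,2,1), (1,1,2), (1,1,2), (2,2,1), (0,1,2), (2,0,0), (1,0,0), (1,2,2), (2,1,2), (1,2,0), (1,0,1), (0,1,1), (0,0,2), (0,1,0), (2,2,0)],
     [(0,0,0), (2,2,0), (2,0,0), (2,0,2), (2,1,0), (0,1,1), (1,0,0), (0,2,2), (1,2,2), (0,2,1), (1,1,1), (1,0,2), (2,1,1), (0,0,2), (2,2,1), (1,0,1), (1,2,1), (1,1,0), (2,1,2), (1,1,2), (0,2,0), (2,2,2), (2,0,1), (0,1,2), (0,1,0), (1,2,0), (0,0,1)],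
     [(2,2,0), (0,1,0), (0,0,2), (0,1,1), (1,0,1), (1,2,0), (2,2,1), (1,0,2), (2,0,2), (1,2,2), (0,2,1), (1,1,2), (1,2,1), (2,2,2), (2,1,0), (0,2,0), (0,2,2), (1,0,0), (2,0,1), (2,1,2), (2,0,0), (0,1,2), (1,1,0), (0,0,1), (1,1,1), (2,1,1)])),
   ((1,2,0,2), ([((0,0,0),(0,0,0)), ((0,0,1),(0,0,2)), ((0,0,2),(0,0,1)), ((0,1,0),(0,2,0)), ((0,1,1),(0,2,2)), ((0,1,2),(0,2,1)), ((0,2,0),(0,1,0)), ((0,2,1),(0,1,2)), ((0,2,2),(0,1,1)), ((1,0,0),(2,0,1)), ((1,0,1),(2,0,0)), ((1,0,2),(2,0,2)), ((1,1,0),(2,2,0)), ((1,1,1),(2,2,2)), ((1,1,2),(2,2,1)), ((1,2,0),(2,1,2)), ((1,2,1),(2,1,1)), ((1,2,2),(2,1,0)), ((2,0,0),(1,0,1)), ((2,0,1),(1,0,0)), ((2,0,2),(1,0,2)), ((2,1,0),(1,2,2)), ((2,1,1),(1,2,1)), ((2,1,2),(1,2,0)), ((2,2,0),(1,1,0)), ((2,2,1),(1,1,2)), ((2,2,2),(1,1,1))],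
     [(0,0,0), (1,2,0), (0,2,1), (2,2,2), (2,0,2), (1,1,2), (2,1,1), (0,2,0), (0,1,1), (0,1,0), (1,0,1), (2,1,0), (1,0,0), (1,2,2), (1,1,1), (0,0,1), (1,1,0), (2,0,1), (2,0,0), (2,2,1), (0,0,2), (1,0,2), (0,1,2), (0,2,2), (2,2,0), (1,2,1), (2,1,2)],
     [(1,2,0), (2,0,0), (2,0,2), (0,1,0), (2,1,1), (1,0,0), (1,1,1), (0,2,1), (0,0,2), (1,2,2), (1,1,2), (2,2,0), (0,2,2), (0,2,2), (2,2,0), (1,1,2), (1,2,2), (0,0,2), (0,2,1), (1,1,1), (1,0,0), (2,1,1), (0,1,0), (2,0,2), (2,0,0), (1,2,0)],
     [(0,0,0), (2,2,0), (2,0,0), (2,0,2), (2,1,0), (0,1,2), (1,0,1), (0,2,1), (1,2,1), (2,2,2), (0,1,1), (0,0,2), (1,2,0), (0,1,0), (0,2,2), (1,0,2), (2,1,2), (1,1,1), (2,2,1), (2,1,1), (1,1,2), (1,1,0), (0,2,0), (2,0,1), (1,0,0), (1,2,2), (0,0,1)],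
     [(2,2,0), (0,1,0), (0,0,2), (0,1,1), (1,0,1), (1,2,0), (2,2,1), (1,0,2), (1,0,0), (1,2,2), (0,2,1), (1,2,1), (2,2,2), (0,1,2), (1,1,2), (1,1,0), (2,0,2), (1,1,1), (0,2,0), (2,0,1), (0,0,1), (2,1,0), (2,1,2), (2,0,0), (0,2,2), (2,1,1)])),
   ((1,2,1,0), ([((0,0,0),(0,0,0)), ((0,0,1),(0,0,2)), ((0,0,2),(0,0,1)), ((0,1,0),(0,2,2)), ((0,1,1),(0,2,1)), ((0,1,2),(0,2,0)), ((0,2,0),(0,1,2)), ((0,2,1),(0,1,1)), ((0,2,2),(0,1,0)), ((1,0,0),(2,0,0)), ((1,0,1),(2,0,2)), ((1,0,2),(2,0,1)), ((1,1,0),(2,2,1)), ((1,1,1),(2,2,0)), ((1,1,2),(2,2,2)), ((1,2,0),(2,1,0)), ((1,2,1),(2,1,2)), ((1,2,2),(2,1,1)), ((2,0,0),(1,0,0)), ((2,0,1),(1,0,2)), ((2,0,2),(1,0,1)), ((2,1,0),(1,2,0)), ((2,1,1),(1,2,2)), ((2,1,2),(1,2,1)), ((2,2,0),(1,1,1)), ((2,2,1),(1,1,0)), ((2,2,2),(1,1,2))],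
     [(0,0,0), (2,2,0), (2,0,1), (2,0,0), (2,1,1), (0,1,1), (0,2,0), (1,1,1), (2,1,2), (0,0,2), (2,2,1), (1,2,0), (2,1,0), (0,2,2), (1,0,1), (2,2,2), (1,2,1), (0,1,0), (1,0,0), (2,0,2), (0,2,1), (0,0,1), (1,0,2), (1,1,0), (1,1,2), (1,2,2), (0,1,2)],
     [(2,2,0), (0,1,0), (0,0,2), (0,1,1), (1,0,1), (0,1,2), (1,2,2), (1,0,2), (1,2,0), (2,2,2), (2,0,0), (1,2,1), (1,1,0), (1,1,0), (1,2,1), (2,0,0), (2,2,2), (1,2,0), (1,0,2), (1,2,2), (0,1,2), (1,0,1), (0,1,1), (0,0,2), (0,1,0), (2,2,0)],
     [(0,0,0), (1,2,0), (0,2,2), (2,2,0), (2,0,1), (2,1,0), (2,1,1), (0,0,2), (1,1,0), (2,0,2), (0,1,2), (2,0,0), (2,2,1), (0,2,1), (0,2,0), (1,0,1), (1,2,1), (2,2,2), (1,0,0), (0,1,0), (2,1,2), (1,0,2), (0,1,1), (1,1,1), (1,2,2), (1,1,2), (0,0,1)],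
     [(1,2,0), (2,0,0), (2,0,2), (0,1,0), (0,1,2), (0,0,1), (1,2,1), (1,1,1), (1,2,2), (1,1,0), (2,2,2), (0,2,1), (1,0,2), (0,0,2), (1,1,2), (0,2,0), (1,0,0), (2,1,1), (2,1,0), (2,0,1), (2,2,1), (2,1,2), (1,0,1), (0,1,1), (0,2,2), (2,2,0)])),
   ((1,2,1,1), ([((0,0,0),(0,0,0)), ((0,0,1),(0,0,2)), ((0,0,2),(0,0,1)), ((0,1,0),(0,2,2)), ((0,1,1),(0,2,1)), ((0,1,2),(0,2,0)), ((0,2,0),(0,1,2)), ((0,2,1),(0,1,1)), ((0,2,2),(0,1,0)), ((1,0,0),(2,0,2)), ((1,0,1),(2,0,1)), ((1,0,2),(2,0,0)), ((1,1,0),(2,2,0)), ((1,1,1),(2,2,2)), ((1,1,2),(2,2,1)), ((1,2,0),(2,1,2)), ((1,2,1),(2,1,1)), ((1,2,2),(2,1,0)), ((2,0,0),(1,0,2)), ((2,0,1),(1,0,1)), ((2,0,2),(1,0,0)), ((2,1,0),(1,2,2)), ((2,1,1),(1,2,1)), ((2,1,2),(1,2,0)), ((2,2,0),(1,1,0)), ((2,2,1),(1,1,2)), ((2,2,2),(1,1,1))],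
     [(0,0,0), (1,2,0), (0,2,0), (2,2,1), (2,0,2), (1,1,1), (0,0,1), (1,1,2), (2,0,1), (2,0,0), (2,2,0), (0,0,2), (1,0,0), (1,2,1), (1,1,0), (2,1,0), (0,2,2), (0,1,0), (0,1,2), (1,0,1), (2,1,2), (1,0,2), (0,1,1), (0,2,1), (2,2,2), (1,2,2), (2,1,1)],
     [(1,2,0), (2,0,0), (2,0,2), (0,1,0), (2,1,1), (2,2,0), (1,1,1), (1,2,2), (0,0,2), (0,2,0), (1,1,2), (1,0,1), (0,2,1), (0,2,1), (1,0,1), (1,1,2), (0,2,0), (0,0,2), (1,2,2), (1,1,1), (2,2,0), (2,1,1), (0,1,0), (2,0,2), (2,0,0), (1,2,0)],
     [(0,0,0), (2,2,0), (2,0,1), (2,0,0), (2,1,1), (0,1,2), (1,0,2), (0,2,1), (1,2,1), (2,2,2), (0,1,1), (0,0,2), (1,2,0), (0,1,0), (0,2,2), (1,0,0), (2,1,0), (1,1,2), (1,0,1), (2,1,2), (1,1,0), (1,1,1), (0,2,0), (2,0,2), (2,2,1), (1,2,2), (0,0,1)],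
     [(2,2,0), (0,1,0), (0,0,2), (0,1,1), (1,0,1), (1,2,0), (2,2,1), (1,0,2), (1,0,0), (1,2,2), (0,2,0), (1,2,1), (2,2,2), (0,1,2), (1,1,2), (1,1,0), (2,0,0), (0,2,1), (1,1,1), (2,0,2), (0,0,1), (2,1,0), (2,1,2), (0,2,2), (2,0,1), (2,1,1)])),
   ((1,2,1,2), ([((0,0,0),(0,0,0)), ((0,0,1),(0,0,2)), ((0,0,2),(0,0,1)), ((0,1,0),(0,2,2)), ((0,1,1),(0,2,1)), ((0,1,2),(0,2,0)), ((0,2,0),(0,1,2)), ((0,2,1),(0,1,1)), ((0,2,2),(0,1,0)), ((1,0,0),(2,0,1)), ((1,0,1),(2,0,0)), ((1,0,2),(2,0,2)), ((1,1,0),(2,2,2)), ((1,1,1),(2,2,1)), ((1,1,2),(2,2,0)), ((1,2,0),(2,1,1)), ((1,2,1),(2,1,0)), ((1,2,2),(2,1,2)), ((2,0,0),(1,0,1)), ((2,0,1),(1,0,0)), ((2,0,2),(1,0,2)), ((2,1,0),(1,2,1)), ((2,1,1),(1,2,0)), ((2,1,2),(1,2,2)), ((2,2,0),(1,1,2)), ((2,2,1),(1,1,1)), ((2,2,2),(1,1,0))],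
     [(0,0,0), (2,2,0), (2,0,1), (2,0,0), (2,1,1), (0,1,0), (1,2,0), (2,2,1), (1,0,1), (0,2,2), (0,0,2), (2,1,2), (1,1,1), (0,2,0), (2,0,2), (1,0,0), (0,1,2), (0,2,1), (2,1,0), (1,2,1), (2,2,2), (0,0,1), (1,0,2), (1,1,0), (1,1,2), (1,2,2), (0,1,1)],
     [(2,2,0), (0,1,0), (0,0,2), (0,1,1), (1,0,1), (1,1,1), (1,0,0), (2,1,1), (2,2,2), (0,1,2), (2,1,0), (2,0,2), (2,1,2), (2,1,2), (2,0,2), (2,1,0), (0,1,2), (2,2,2), (2,1,1), (1,0,0), (1,1,1), (1,0,1), (0,1,1), (0,0,2), (0,1,0), (2,2,0)],
     [(0,0,0), (1,2,0), (0,2,1), (2,2,2), (2,0,0), (2,1,2), (2,1,0), (1,0,1), (2,1,1), (0,1,2), (1,0,0), (0,1,1), (0,2,2), (1,0,2), (2,0,1), (1,2,1), (1,1,2), (0,2,0), (0,1,0), (2,2,1), (2,2,0), (1,2,2), (1,1,1), (0,0,1), (1,1,0), (2,0,2), (0,0,2)],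
     [(1,2,0), (2,0,0), (2,0,2), (0,1,0), (0,1,2), (0,0,1), (2,2,0), (1,1,0), (1,0,0), (1,2,1), (2,1,2), (0,1,1), (1,1,1), (1,0,2), (2,2,1), (0,2,0), (2,1,1), (0,2,2), (2,1,0), (0,0,2), (2,0,1), (0,2,1), (2,2,2), (1,1,2), (1,2,2), (1,0,1)])),
   ((1,2,2,0), ([((0,0,0),(0,0,0)), ((0,0,1),(0,0,2)), ((0,0,2),(0,0,1)), ((0,1,0),(0,2,1)), ((0,1,1),(0,2,0)), ((0,1,2),(0,2,2)), ((0,2,0),(0,1,1)), ((0,2,1),(0,1,0)), ((0,2,2),(0,1,2)), ((1,0,0),(2,0,0)), ((1,0,1),(2,0,2)), ((1,0,2),(2,0,1)), ((1,1,0),(2,2,0)), ((1,1,1),(2,2,2)), ((1,1,2),(2,2,1)), ((1,2,0),(2,1,2)), ((1,2,1),(2,1,1)), ((1,2,2),(2,1,0)), ((2,0,0),(1,0,0)), ((2,0,1),(1,0,2)), ((2,0,2),(1,0,1)), ((2,1,0),(1,2,2)), ((2,1,1),(1,2,1)), ((2,1,2),(1,2,0)), ((2,2,0),(1,1,0)), ((2,2,1),(1,1,2)), ((2,2,2),(1,1,1))],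
     [(0,0,0), (1,2,0), (0,2,2), (2,2,0), (2,0,2), (2,1,1), (2,0,0), (1,1,1), (2,1,2), (1,0,0), (0,2,0), (0,2,1), (1,1,0), (0,0,2), (2,2,1), (0,1,0), (0,1,1), (2,0,1), (1,2,2), (2,2,2), (1,0,1), (1,2,1), (1,0,2), (1,1,2), (0,1,2), (2,1,0), (0,0,1)],
     [(1,2,0), (2,0,0), (2,0,2), (0,1,0), (0,1,2), (0,2,0), (2,1,1), (1,0,2), (2,2,1), (2,2,0), (0,0,1), (1,2,2), (2,2,2), (2,2,2), (1,2,2), (0,0,1), (2,2,0), (2,2,1), (1,0,2), (2,1,1), (0,2,0), (0,1,2), (0,1,0), (2,0,2), (2,0,0), (1,2,0)],
     [(0,0,0), (1,2,0), (0,2,2), (2,2,0), (2,0,2), (2,1,1), (2,1,2), (0,0,1), (1,1,2), (2,1,0), (0,2,1), (0,1,0), (1,0,0), (0,2,0), (0,1,1), (2,0,0), (1,2,1), (1,1,1), (1,1,0), (2,2,2), (1,2,2), (1,0,2), (0,1,2), (2,2,1), (1,0,1), (2,0,1), (0,0,2)],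
     [(1,2,0), (2,0,0), (2,0,2), (0,1,0), (0,1,2), (0,0,1), (1,2,1), (1,1,1), (1,0,2), (1,1,2), (0,2,0), (1,2,2), (2,2,0), (0,2,2), (2,2,2), (2,2,1), (0,2,1), (0,0,2), (1,1,0), (2,0,1), (0,1,1), (2,1,0), (2,1,1), (2,1,2), (1,0,0), (1,0,1)])),
   ((1,2,2,1), ([((0,0,0),(0,0,0)), ((0,0,1),(0,0,2)), ((0,0,2),(0,0,1)), ((0,1,0),(0,2,1)), ((0,1,1),(0,2,0)), ((0,1,2),(0,2,2)), ((0,2,0),(0,1,1)), ((0,2,1),(0,1,0)), ((0,2,2),(0,1,2)), ((1,0,0),(2,0,2)), ((1,0,1),(2,0,1)), ((1,0,2),(2,0,0)), ((1,1,0),(2,2,2)), ((1,1,1),(2,2,1)), ((1,1,2),(2,2,0)), ((1,2,0),(2,1,1)), ((1,2,1),(2,1,0)), ((1,2,2),(2,1,2)), ((2,0,0),(1,0,2)), ((2,0,1),(1,0,1)), ((2,0,2),(1,0,0)), ((2,1,0),(1,2,1)), ((2,1,1),(1,2,0)), ((2,1,2),(1,2,2)), ((2,2,0),(1,1,2)), ((2,2,1),(1,1,1)), ((2,2,2),(1,1,0))],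
     [(0,0,0), (0,1,1), (1,0,1), (1,0,2), (1,1,2), (2,2,0), (1,2,2), (0,2,0), (2,1,0), (2,0,1), (1,1,0), (2,0,2), (1,2,1), (2,2,1), (0,2,2), (2,1,1), (0,0,1), (2,1,2), (2,0,0), (1,2,0), (0,2,1), (2,2,2), (0,0,2), (0,1,2), (0,1,0), (1,0,0), (1,1,1)],
     [(0,1,1), (1,2,2), (0,0,1), (0,1,0), (1,1,2), (2,0,2), (2,0,1), (2,2,2), (0,2,2), (2,1,1), (1,2,1), (2,2,1), (1,0,2), (1,0,2), (2,2,1), (1,2,1), (2,1,1), (0,2,2), (2,2,2), (2,0,1), (2,0,2), (1,1,2), (0,1,0), (0,0,1), (1,2,2), (0,1,1)],
     [(0,0,0), (1,2,0), (0,2,0), (2,2,1), (2,0,0), (2,1,2), (2,1,0), (1,0,1), (2,1,1), (0,1,2), (1,2,2), (0,0,1), (0,2,1), (1,1,0), (2,0,2), (2,2,0), (1,0,0), (0,1,0), (1,1,2), (1,1,1), (1,0,2), (2,0,1), (1,2,1), (0,1,1), (0,2,2), (2,2,2), (0,0,2)],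
     [(1,2,0), (2,0,0), (2,0,2), (0,1,0), (0,1,2), (0,0,1), (2,2,0), (1,1,0), (1,0,1), (1,1,1), (2,1,0), (0,2,0), (1,2,2), (1,2,1), (0,2,1), (2,1,1), (2,1,2), (1,0,0), (0,0,2), (0,2,2), (1,0,2), (2,2,2), (2,2,1), (0,1,1), (2,0,1), (1,1,2)])),
   ((1,2,2,2), ([((0,0,0),(0,0,0)), ((0,0,1),(0,0,2)), ((0,0,2),(0,0,1)), ((0,1,0),(0,2,1)), ((0,1,1),(0,2,0)), ((0,1,2),(0,2,2)), ((0,2,0),(0,1,1)), ((0,2,1),(0,1,0)), ((0,2,2),(0,1,2)), ((1,0,0),(2,0,1)), ((1,0,1),(2,0,0)), ((1,0,2),(2,0,2)), ((1,1,0),(2,2,1)), ((1,1,1),(2,2,0)), ((1,1,2),(2,2,2)), ((1,2,0),(2,1,0)), ((1,2,1),(2,1,2)), ((1,2,2),(2,1,1)), ((2,0,0),(1,0,1)), ((2,0,1),(1,0,0)), ((2,0,2),(1,0,2)), ((2,1,0),(1,2,0)), ((2,1,1),(1,2,2)), ((2,1,2),(1,2,1)), ((2,2,0),(1,1,1)), ((2,2,1),(1,1,0)), ((2,2,2),(1,1,2))],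
     [(0,0,0), (2,2,0), (2,0,2), (2,0,1), (2,1,2), (0,1,1), (1,0,2), (0,1,2), (1,0,1), (2,0,0), (1,0,0), (1,1,2), (2,2,1), (1,1,0), (0,0,1), (1,1,1), (1,2,0), (0,2,2), (1,2,2), (2,1,0), (1,2,1), (2,1,1), (0,1,0), (0,2,1), (0,2,0), (0,0,2), (2,2,2)],
     [(2,2,0), (0,1,0), (0,0,2), (0,1,1), (1,0,1), (1,2,0), (2,1,1), (1,2,1), (1,0,2), (2,0,1), (0,1,2), (1,1,0), (2,2,2), (2,2,2), (1,1,0), (0,1,2), (2,0,1), (1,0,2), (1,2,1), (2,1,1), (1,2,0), (1,0,1), (0,1,1), (0,0,2), (0,1,0), (2,2,0)],
     [(0,0,0), (1,2,0), (0,2,1), (2,2,2), (2,0,1), (2,1,0), (2,1,1), (0,0,2), (1,1,0), (2,1,2), (0,2,2), (1,0,2), (0,1,2), (0,2,0), (0,1,1), (1,1,1), (1,0,0), (1,2,1), (2,2,1), (1,0,1), (2,2,0), (1,1,2), (0,1,0), (2,0,0), (2,0,2), (1,2,2), (0,0,1)],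
     [(1,2,0), (2,0,0), (2,0,2), (0,1,0), (0,1,2), (0,0,1), (1,2,1), (1,1,1), (1,0,0), (1,1,2), (1,1,0), (2,1,1), (0,1,1), (0,2,2), (1,0,1), (0,2,0), (0,2,1), (1,0,2), (2,1,0), (1,2,2), (2,2,2), (2,0,1), (2,2,0), (0,0,2), (2,2,1), (2,1,2)]))] t)"

definition wit39 :: "nat \<Rightarrow> ((nat\<times>nat) \<times> (nat\<times>nat) \<times> (nat\<times>nat)) option" where
  "wit39 t = (map_of [(0, ((0,1), (1,0), (2,0))),
    (2, ((0,1), (1,0), (2,0))),
    (4, ((0,1), (1,0), (2,0))),
    (5, ((0,1), (1,0), (2,0))),
    (6, ((0,1), (1,0), (2,0))),
    (7, ((0,1), (1,0), (2,0))),
    (8, ((0,1), (1,0), (2,0))),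
    (10, ((0,1), (1,0), (2,0))),
    (11, ((0,1), (1,0), (2,0))),
    (12, ((0,1), (1,0), (2,0)))] t)"

definition dat39 :: "nat \<Rightarrow> (((nat\<times>nat)\<times>(nat\<times>nat)) list \<times> (nat\<times>nat) list \<times> (nat\<times>nat) list) option" where
  "dat39 t = (map_of [(3, ([((0,0),(0,0)), ((0,1),(0,12)), ((0,2),(0,11)), ((0,3),(0,10)), ((0,4),(0,9)), ((0,5),(0,8)), ((0,6),(0,7)), ((0,7),(0,6)), ((0,8),(0,5)), ((0,9),(0,4)), ((0,10),(0,3)), ((0,11),(0,2)), ((0,12),(0,1)), ((1,0),(2,0)), ((1,1),(2,4)), ((1,2),(2,8)), ((1,3),(2,12)), ((1,4),(2,3)), ((1,5),(2,7)), ((1,6),(2,11)), ((1,7),(2,2)), ((1,8),(2,6)), ((1,9),(2,10)), ((1,10),(2,1)), ((1,11),(2,5)), ((1,12),(2,9)), ((2,0),(1,0)), ((2,1),(1,10)), ((2,2),(1,7)), ((2,3),(1,4)), ((2,4),(1,1)), ((2,5),(1,11)), ((2,6),(1,8)), ((2,7),(1,5)), ((2,8),(1,2)), ((2,9),(1,12)), ((2,10),(1,9)), ((2,11),(1,6)), ((2,12),(1,3))],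
     [(0,0), (0,1), (0,8), (1,3), (0,4), (1,12), (2,4), (0,9), (1,10), (1,0), (0,6), (0,10), (2,7), (1,2), (2,5), (1,5), (1,7), (2,6), (0,11), (0,3), (0,2), (1,8), (1,6), (2,0), (1,9), (2,2), (2,11), (2,8), (2,1), (2,9), (0,5), (2,3), (1,1), (0,7), (2,12), (1,11), (2,10), (1,4), (0,12)],
     [(0,1), (0,7), (1,5), (2,3), (1,0), (1,7), (1,10), (1,9), (0,3), (2,6), (0,4), (2,8), (2,4), (1,12), (2,12), (0,2), (1,11), (1,6), (0,5), (0,12), (1,2), (0,11), (1,8), (2,9), (1,1), (0,9), (0,10), (0,6), (0,8), (1,4), (2,10), (2,0), (2,11), (2,1), (2,7), (1,3), (2,5), (2,2)])),
   (9, ([((0,0),(0,0)), ((0,1),(0,12)), ((0,2),(0,11)), ((0,3),(0,10)), ((0,4),(0,9)), ((0,5),(0,8)), ((0,6),(0,7)), ((0,7),(0,6)), ((0,8),(0,5)), ((0,9),(0,4)), ((0,10),(0,3)), ((0,11),(0,2)), ((0,12),(0,1)), ((1,0),(2,0)), ((1,1),(2,10)), ((1,2),(2,7)), ((1,3),(2,4)), ((1,4),(2,1)), ((1,5),(2,11)), ((1,6),(2,8)), ((1,7),(2,5)), ((1,8),(2,2)), ((1,9),(2,12)), ((1,10),(2,9)), ((1,11),(2,6)), ((1,12),(2,3)), ((2,0),(1,0)), ((2,1),(1,4)), ((2,2),(1,8)), ((2,3),(1,12)), ((2,4),(1,3)), ((2,5),(1,7)), ((2,6),(1,11)), ((2,7),(1,2)),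 ((2,8),(1,6)), ((2,9),(1,10)), ((2,10),(1,1)), ((2,11),(1,5)), ((2,12),(1,9))],
     [(0,0), (0,1), (0,8), (1,12), (2,6), (0,2), (2,7), (0,6), (1,5), (1,8), (0,4), (2,9), (2,4), (1,2), (2,2), (1,1), (1,3), (2,10), (1,9), (1,0), (2,11), (1,7), (2,12), (0,11), (2,3), (1,11), (0,5), (0,10), (0,7), (0,3), (0,9), (2,8), (1,10), (2,5), (1,6), (1,4), (2,1), (2,0), (0,12)],
     [(0,1), (0,7), (1,5), (1,2), (1,0), (2,1), (1,8), (1,3), (0,3), (2,6), (2,10), (0,8), (2,3), (1,10), (2,8), (0,2), (1,9), (2,5), (0,4), (1,11), (2,0), (1,1), (1,7), (2,9), (2,2), (2,11), (0,5), (0,10), (0,9), (0,6), (2,7), (2,12), (1,6), (2,4), (0,11), (1,4), (0,12), (1,12)]))] t)"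

definition good27 :: "nat\<times>nat\<times>nat\<times>nat \<Rightarrow> bool" where
  "good27 t = (case t of (a,b,al,be) \<Rightarrow> (case dat27 t of None \<Rightarrow> False | Some (ivt, L1, Q1, L2, Q2) \<Rightarrow>
     (let M = mul27 a b al be; iv = (\<lambda>p. the (map_of ivt p)) in
       cinvok D27 M (0,0,0) iv \<and> cnarc D27 (0,0,0) iv L1 Q1 \<and> cquot M iv L1 = Q1 \<and>
       cdhh D27 (0,0,0) iv L2 Q2 \<and> cquot M iv L2 = Q2)))"

definition bad27 :: "nat\<times>nat\<times>nat\<times>nat \<Rightarrow> bool" where
  "bad27 t = (case t of (a,b,al,be) \<Rightarrow> (case wit27 t of None \<Rightarrow> False | Some (p,q,r) \<Rightarrow>
     mul27 a b al be (mul27 a b al be p q) r \<in> set D27 \<and> mul27 a b al be p (mul27 a b al be q r) \<in> set D27 \<and>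
     mul27 a b al be (mul27 a b al be p q) r \<noteq> mul27 a b al be p (mul27 a b al be q r)))"

definition comm27 :: "nat\<times>nat\<times>nat\<times>nat \<Rightarrow> bool" where
  "comm27 t = (case t of (a,b,al,be) \<Rightarrow> mul27 a b al be (0,1,0) (1,0,0) = mul27 a b al be (1,0,0) (0,1,0))"

definition params27 :: "(nat\<times>nat\<times>nat\<times>nat) list" where
  "params27 = List.product [0..<3] (List.product [0..<3] (List.product [0..<3] [0..<3]))"

lemma set_params27: "set params27 = {..<3} \<times> {..<3} \<times> {..<3} \<times> {..<3}"
  unfolding params27_def by auto

definition good39 :: "nat \<Rightarrow> bool" where
  "good39 r = (case dat39 r of None \<Rightarrow> False | Some (ivt, L, Q) \<Rightarrow>
     (let M = mul39 r; iv = (\<lambda>p. the (map_of ivt p)) in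
       cinvok D39 M (0,0) iv \<and> cdhh D39 (0,0) iv L Q \<and> cquot M iv L = Q))"

definition bad39 :: "nat \<Rightarrow> bool" where
  "bad39 r = (case wit39 r of None \<Rightarrow> False | Some (p,q,s) \<Rightarrow>
     mul39 r (mul39 r p q) s \<in> set D39 \<and> mul39 r p (mul39 r q s) \<in> set D39 \<and>
     mul39 r (mul39 r p q) s \<noteq> mul39 r p (mul39 r q s))"

lemma check39: "list_all (\<lambda>r. r = 1 \<or> bad39 r \<or> good39 r) [0..<13]"
  by code_simp

lemma check27: "list_all (\<lambda>t. comm27 t \<or> bad27 t \<or> good27 t) params27"
  by code_simp


context group begin

lemma inv_cancel_l [simp]: "g \<in> carrier G \<Longrightarrow> x \<in> carrier G \<Longrightarrow> inv g \<otimes> (g \<otimes> x) = x"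
  by (simp add: m_assoc[symmetric])
lemma inv_cancel_l2 [simp]: "g \<in> carrier G \<Longrightarrow> x \<in> carrier G \<Longrightarrow> g \<otimes> (inv g \<otimes> x) = x"
  by (simp add: m_assoc[symmetric])

definition Zc where "Zc = {z \<in> carrier G. \<forall>g\<in>carrier G. g \<otimes> z = z \<otimes> g}"
definition Cen where "Cen x = {g \<in> carrier G. g \<otimes> x = x \<otimes> g}"

lemma Cen_subgroup: assumes x: "x \<in> carrier G" shows "subgroup (Cen x) G"
proof
  show "Cen x \<subseteq> carrier G" unfolding Cen_def by auto
  show "\<one> \<in> Cen x" using x unfolding Cen_def by auto
next
  fix a b assume a: "a \<in> Cen x" and b: "b \<in> Cen x"
  hence ac: "a \<in> carrier G" "a \<otimes> x = x \<otimes> a" and bc: "b \<in> carrier G" "b \<otimes> x = x \<otimes> b" unfolding Cen_def by auto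
  have "a \<otimes> b \<otimes> x = a \<otimes> (b \<otimes> x)" using ac(1) bc(1) x by (simp add: m_assoc)
  also have "\<dots> = a \<otimes> (x \<otimes> b)" using bc(2) by simp
  also have "\<dots> = (a \<otimes> x) \<otimes> b" using ac(1) bc(1) x by (simp add: m_assoc)
  also have "\<dots> = (x \<otimes> a) \<otimes> b" using ac(2) by simp
  also have "\<dots> = x \<otimes> (a \<otimes> b)" using ac(1) bc(1) x by (simp add: m_assoc)
  finally show "a \<otimes> b \<in> Cen x" using ac bc unfolding Cen_def by auto
next
  fix a assume a: "a \<in> Cen x"
  hence ac: "a \<in> carrier G" "a \<otimes> x = x \<otimes> a" unfolding Cen_def by auto
  have "inv a \<otimes> x = inv a \<otimes> x \<otimes> (a \<otimes> inv a)" using ac(1) x by simp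
  also have "\<dots> = inv a \<otimes> (x \<otimes> a) \<otimes> inv a" using ac(1) x by (simp add: m_assoc)
  also have "\<dots> = inv a \<otimes> (a \<otimes> x) \<otimes> inv a" using ac(2) by simp
  also have "\<dots> = x \<otimes> inv a" using ac(1) x by (simp add: m_assoc[symmetric])
  finally show "inv a \<in> Cen x" using ac unfolding Cen_def by auto
qed

lemma Zc_subgroup: "subgroup Zc G"
proof
  show "Zc \<subseteq> carrier G" unfolding Zc_def by auto
  show "\<one> \<in> Zc" unfolding Zc_def by auto
next
  fix a b assume "a \<in> Zc" "b \<in> Zc"
  hence ac: "a \<in> carrier G" "\<And>g. g\<in>carrier G \<Longrightarrow> g \<otimes> a = a \<otimes> g"
    and bc: "b \<in> carrier G" "\<And>g. g\<in>carrier G \<Longrightarrow> g \<otimes> b = b \<otimes> g" unfolding Zc_def by auto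
  have "\<forall>g\<in>carrier G. g \<otimes> (a \<otimes> b) = a \<otimes> b \<otimes> g"
  proof
    fix g assume g: "g \<in> carrier G"
    have "g \<otimes> (a \<otimes> b) = (g \<otimes> a) \<otimes> b" using g ac(1) bc(1) by (simp add: m_assoc)
    also have "\<dots> = (a \<otimes> g) \<otimes> b" using ac(2)[OF g] by simp
    also have "\<dots> = a \<otimes> (g \<otimes> b)" using g ac(1) bc(1) by (simp add: m_assoc)
    also have "\<dots> = a \<otimes> (b \<otimes> g)" using bc(2)[OF g] by simp
    also have "\<dots> = a \<otimes> b \<otimes> g" using g ac(1) bc(1) by (simp add: m_assoc)
    finally show "g \<otimes> (a \<otimes> b) = a \<otimes> b \<otimes> g" .
  qed
  thus "a \<otimes> b \<in> Zc" using ac(1) bc(1) unfolding Zc_def by auto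
next
  fix a assume a: "a \<in> Zc"
  hence ac: "a \<in> carrier G" "\<forall>g\<in>carrier G. g \<otimes> a = a \<otimes> g" unfolding Zc_def by auto
  have "\<forall>g\<in>carrier G. g \<otimes> inv a = inv a \<otimes> g"
  proof
    fix g assume g: "g \<in> carrier G"
    have "inv a \<otimes> g = inv a \<otimes> g \<otimes> (a \<otimes> inv a)" using ac(1) g by simp
    also have "\<dots> = inv a \<otimes> (g \<otimes> a) \<otimes> inv a" using ac(1) g by (simp add: m_assoc)
    also have "\<dots> = inv a \<otimes> (a \<otimes> g) \<otimes> inv a" using ac(2) g by simp
    also have "\<dots> = g \<otimes> inv a" using ac(1) g by (simp add: m_assoc[symmetric])
    finally show "g \<otimes> inv a = inv a \<otimes> g" by simp
  qed
  thus "inv a \<in> Zc" using ac(1) unfolding Zc_def by auto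
qed

lemma Zc_sub_Cen: "x \<in> carrier G \<Longrightarrow> Zc \<subseteq> Cen x"
  unfolding Zc_def Cen_def by auto

lemma sub_card_dvd: assumes "finite (carrier G)" "subgroup H G" shows "card H dvd order G"
  using lagrange[OF assms(2)] by (metis dvd_triv_right)

lemma dvd27: "(d::nat) dvd 27 \<Longrightarrow> d = 1 \<or> d = 3 \<or> d = 9 \<or> d = 27"
proof -
  assume d: "d dvd 27"
  hence "d < 28" using dvd_imp_le[of d 27] by simp
  hence "d \<in> set (filter (\<lambda>d. d dvd (27::nat)) [0..<28])" using d by simp
  also have "filter (\<lambda>d. d dvd (27::nat)) [0..<28] = [1,3,9,27]" by code_simp
  finally show ?thesis by simp
qed


lemma conj_central_eq:
  assumes "g \<in> carrier G" "x \<in> carrier G" "y \<in> Zc" "g \<otimes> x \<otimes> inv g = y"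
  shows "x = y"
proof -
  have y: "y \<in> carrier G" "\<forall>h\<in>carrier G. h \<otimes> y = y \<otimes> h" using assms(3) unfolding Zc_def by auto
  have "x = inv g \<otimes> (g \<otimes> x \<otimes> inv g) \<otimes> g" using assms(1,2) by (simp add: m_assoc)
  also have "\<dots> = inv g \<otimes> (y \<otimes> g)" using assms(1,2,4) y(1) by (simp add: m_assoc)
  also have "\<dots> = inv g \<otimes> (g \<otimes> y)" using y assms(1) by simp
  also have "\<dots> = y" using y(1) assms(1) by simp
  finally show ?thesis .
qed

lemma conj_comm: "g \<in> carrier G \<Longrightarrow> x \<in> carrier G \<Longrightarrow> g \<otimes> x \<otimes> inv g = x \<Longrightarrow> g \<otimes> x = x \<otimes> g"
proof -
  assume a: "g \<in> carrier G" "x \<in> carrier G" "g \<otimes> x \<otimes> inv g = x"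
  have "g \<otimes> x = g \<otimes> x \<otimes> inv g \<otimes> g" using a(1,2) by (simp add: m_assoc)
  also have "\<dots> = x \<otimes> g" using a(3) by simp
  finally show ?thesis .
qed

lemma center_3dvd:
  assumes fin: "finite (carrier G)" and o27: "order G = 27"
  shows "3 dvd card Zc"
proof -
  let ?\<phi> = "\<lambda>g. (\<lambda>h\<in>carrier G. g \<otimes> h \<otimes> inv g)"
  interpret A: group_action G "carrier G" ?\<phi> by (rule action_by_conjugation)
  have orb: "orbit G ?\<phi> x = {g \<otimes> x \<otimes> inv g | g. g \<in> carrier G}" if "x \<in> carrier G" for x
    using that unfolding orbit_def by auto
  have three: "3 dvd card (orbit G ?\<phi> x)" if x: "x \<in> carrier G - Zc" for x
  proof -
    have "card (orbit G ?\<phi> x) * card (stabilizer G ?\<phi> x) = 27"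
      using A.orbit_stabilizer_theorem[of x] x o27 by simp
    hence "card (orbit G ?\<phi> x) dvd 27" by (rule dvdI[OF sym])
    moreover have "card (orbit G ?\<phi> x) \<noteq> 1"
    proof
      assume c1: "card (orbit G ?\<phi> x) = 1"
      have xin: "x \<in> orbit G ?\<phi> x" using x orb[of x] by (auto intro!: exI[of _ \<one>])
      obtain a where a: "orbit G ?\<phi> x = {a}" using card_1_singletonE[OF c1] by blast
      have "orbit G ?\<phi> x = {x}" using a xin by simp
      hence "\<forall>g\<in>carrier G. g \<otimes> x \<otimes> inv g = x" using orb[of x] x by auto
      hence "\<forall>g\<in>carrier G. g \<otimes> x = x \<otimes> g"
        using x by (auto intro!: conj_comm)
      thus False using x unfolding Zc_def by auto
    qed
    ultimately show ?thesis using dvd27[of "card (orbit G ?\<phi> x)"] by auto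
  qed
  let ?C = "orbit G ?\<phi> ` (carrier G - Zc)"
  have U: "\<Union> ?C = carrier G - Zc"
  proof
    show "\<Union> ?C \<subseteq> carrier G - Zc"
    proof
      fix y assume "y \<in> \<Union> ?C"
      then obtain x where x: "x \<in> carrier G - Zc" "y \<in> orbit G ?\<phi> x" by auto
      then obtain g where g: "g \<in> carrier G" "y = g \<otimes> x \<otimes> inv g" using orb[of x] by auto
      hence "y \<in> carrier G" using x by auto
      moreover have "y \<notin> Zc"
      proof
        assume "y \<in> Zc"
        hence "x = y" using conj_central_eq[of g x y] x(1) g by blast
        thus False using x(1) \<open>y \<in> Zc\<close> by simp
      qed
      ultimately show "y \<in> carrier G - Zc" by simp
    qed
  next
    show "carrier G - Zc \<subseteq> \<Union> ?C"
    proof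
      fix x assume x: "x \<in> carrier G - Zc"
      hence "x \<in> orbit G ?\<phi> x" using orb[of x] by (auto intro!: exI[of _ \<one>])
      thus "x \<in> \<Union> ?C" using x by auto
    qed
  qed
  have "3 dvd card (\<Union> ?C)"
  proof (rule dvd_partition)
    show "finite (\<Union> ?C)" using U fin by simp
    show "\<forall>c\<in>?C. 3 dvd card c" using three by auto
    show "\<forall>c1\<in>?C. \<forall>c2\<in>?C. c1 \<noteq> c2 \<longrightarrow> c1 \<inter> c2 = {}"
    proof (intro ballI impI)
      fix c1 c2 assume c: "c1 \<in> ?C" "c2 \<in> ?C" "c1 \<noteq> c2"
      have "c1 \<in> orbits G (carrier G) ?\<phi>" "c2 \<in> orbits G (carrier G) ?\<phi>"
        using c unfolding orbits_def by auto
      thus "c1 \<inter> c2 = {}" using A.disjoint_union c(3) by blast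
    qed
  qed
  hence "3 dvd card (carrier G - Zc)" using U by simp
  moreover have "card (carrier G - Zc) = card (carrier G) - card Zc"
    using card_Diff_subset[of Zc "carrier G"] subgroup.subset[OF Zc_subgroup]
      finite_subset[OF subgroup.subset[OF Zc_subgroup] fin] by simp
  moreover have "card Zc \<le> card (carrier G)" using Zc_subgroup fin
    by (simp add: card_mono subgroup.subset)
  note c = calculation this
  ultimately show ?thesis
  proof -
    have "card Zc = 27 - card (carrier G - Zc)" using c o27 unfolding order_def by simp
    thus ?thesis using \<open>3 dvd card (carrier G - Zc)\<close> by (simp add: dvd_diff_nat)
  qed
qed

lemma sub_pow_closed: "subgroup H G \<Longrightarrow> h \<in> H \<Longrightarrow> h [^] (n::nat) \<in> H"
  by (induction n) (auto simp: subgroup.one_closed subgroup.m_closed)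

lemma pow27: "finite (carrier G) \<Longrightarrow> order G = 27 \<Longrightarrow> g \<in> carrier G \<Longrightarrow> g [^] (27::nat) = \<one>"
  using pow_order_eq_1[of g] by simp

lemma sq_in:
  assumes fin: "finite (carrier G)" and o27: "order G = 27" and H: "subgroup H G"
    and g: "g \<in> carrier G" and g2: "g [^] (2::nat) \<in> H"
  shows "g \<in> H"
proof -
  have "(g [^] (2::nat)) [^] (14::nat) = g [^] (27::nat) \<otimes> g [^] (1::nat)"
    using g nat_pow_mult[of g "27::nat" "1::nat"] by (simp add: nat_pow_pow)
  also have "\<dots> = g" using pow27[OF fin o27 g] g by simp
  finally show ?thesis using sub_pow_closed[OF H g2, of 14] by simp
qed

lemma coset_inj_aux:
  assumes H: "subgroup H G" and y: "y \<in> carrier G" "y \<notin> H" "y [^] (2::nat) \<notin> H"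
    and j: "(j::nat) \<le> j'" "j' < 3" and h: "h \<in> H" "h' \<in> H" and eq: "y [^] j \<otimes> h = y [^] j' \<otimes> h'"
  shows "j = j' \<and> h = h'"
proof -
  have hc: "h \<in> carrier G" "h' \<in> carrier G" using h H subgroup.subset by blast+
  define d where "d = j' - j"
  have j': "j' = j + d" using j d_def by simp
  have "y [^] j \<otimes> h = y [^] j \<otimes> (y [^] d \<otimes> h')"
    using eq y(1) hc by (simp add: j' nat_pow_mult[symmetric] m_assoc)
  hence hh: "h = y [^] d \<otimes> h'" using y(1) hc by simp
  hence "y [^] d = h \<otimes> inv h'" using y(1) hc by (simp add: m_assoc)
  hence yd: "y [^] d \<in> H" using h H by (simp add: subgroup.m_closed subgroup.m_inv_closed)
  have "d < 3" using j d_def by simp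
  hence "d = 0 \<or> d = 1 \<or> d = 2" by auto
  hence "d = 0" using yd y by auto
  thus ?thesis using j' hh y hc by simp
qed

lemma coset_inj:
  assumes H: "subgroup H G" and y: "y \<in> carrier G" "y \<notin> H" "y [^] (2::nat) \<notin> H"
    and j: "(j::nat) < 3" "j' < 3" and h: "h \<in> H" "h' \<in> H" and eq: "y [^] j \<otimes> h = y [^] j' \<otimes> h'"
  shows "j = j' \<and> h = h'"
proof (cases "j \<le> j'")
  case True thus ?thesis using coset_inj_aux[OF H y True j(2) h eq] by simp
next
  case False thus ?thesis using coset_inj_aux[OF H y _ j(1) h(2) h(1) eq[symmetric]] by auto
qed

lemma decomp:
  assumes K: "finite K" and H: "subgroup H G" and fH: "finite H"
    and y: "y \<in> carrier G" "y \<notin> H" "y [^] (2::nat) \<notin> H"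
    and cl: "\<And>(j::nat) h. j < 3 \<Longrightarrow> h \<in> H \<Longrightarrow> y [^] j \<otimes> h \<in> K"
    and c: "card K = 3 * card H"
  shows "\<And>g. g \<in> K \<Longrightarrow> \<exists>j::nat<3. \<exists>h\<in>H. g = y [^] j \<otimes> h"
proof -
  let ?f = "\<lambda>(j::nat, h). y [^] j \<otimes> h"
  have inj: "inj_on ?f ({..<3} \<times> H)"
    using coset_inj[OF H y] by (auto simp: inj_on_def)
  have "card (?f ` ({..<3} \<times> H)) = 3 * card H"
    using card_image[OF inj] by (simp add: card_cartesian_product)
  moreover have "?f ` ({..<3} \<times> H) \<subseteq> K" using cl by auto
  ultimately have eqK: "?f ` ({..<3} \<times> H) = K" using K c by (metis card_subset_eq)
  fix g assume "g \<in> K"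
  then obtain p where "p \<in> {..<3} \<times> H" "g = ?f p" using eqK by (metis imageE)
  thus "\<exists>j::nat<3. \<exists>h\<in>H. g = y [^] j \<otimes> h" by auto
qed

lemma card_Zc3:
  assumes fin: "finite (carrier G)" and o27: "order G = 27" and nc: "\<not> comm_group G"
  shows "card Zc = 3"
proof -
  have Zs: "Zc \<subseteq> carrier G" using Zc_subgroup subgroup.subset by blast
  have notall: "\<exists>g\<in>carrier G. g \<notin> Zc"
  proof (rule ccontr)
    assume "\<not> (\<exists>g\<in>carrier G. g \<notin> Zc)"
    hence "\<forall>g\<in>carrier G. \<forall>h\<in>carrier G. g \<otimes> h = h \<otimes> g" unfolding Zc_def by auto
    hence "comm_group G" by (intro group_comm_groupI) auto
    thus False using nc by simp
  qed
  then obtain g where g: "g \<in> carrier G" "g \<notin> Zc" by blast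
  have d: "card Zc dvd 27" using sub_card_dvd[OF fin Zc_subgroup] o27 by simp
  have t: "3 dvd card Zc" using center_3dvd[OF fin o27] .
  have n27: "card Zc \<noteq> 27"
  proof
    assume "card Zc = 27"
    hence "Zc = carrier G" using card_subset_eq[OF fin Zs] o27 unfolding order_def by simp
    thus False using g by simp
  qed
  have n9: "card Zc \<noteq> 9"
  proof
    assume c9: "card Zc = 9"
    have sub: "insert g Zc \<subseteq> Cen g" using Zc_sub_Cen[OF g(1)] g(1) unfolding Cen_def by auto
    have fC: "finite (Cen g)" using fin unfolding Cen_def by simp
    have "card (insert g Zc) = 10" using c9 g(2) finite_subset[OF Zs fin] by simp
    hence "10 \<le> card (Cen g)" using card_mono[OF fC sub] by simp
    moreover have "card (Cen g) dvd 27" using sub_card_dvd[OF fin Cen_subgroup[OF g(1)]] o27 by simp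
    ultimately have "card (Cen g) = 27" using dvd27 by force
    hence "Cen g = carrier G" using card_subset_eq[OF fin, of "Cen g"] o27 unfolding order_def Cen_def by auto
    hence "g \<in> Zc" using g(1) unfolding Cen_def Zc_def by auto
    thus False using g by simp
  qed
  show ?thesis using dvd27[OF d] t n27 n9 by auto
qed


lemma Zc_gen:
  assumes fin: "finite (carrier G)" and o27: "order G = 27" and c3: "card Zc = 3"
  shows "\<exists>z\<in>Zc. z \<noteq> \<one> \<and> z [^] (3::nat) = \<one> \<and> (\<forall>c\<in>Zc. \<exists>k::nat<3. c = z [^] k)
     \<and> (\<forall>k k'::nat. k < 3 \<longrightarrow> k' < 3 \<longrightarrow> z [^] k = z [^] k' \<longrightarrow> k = k')"
proof -
  have Zs: "Zc \<subseteq> carrier G" using Zc_subgroup subgroup.subset by blast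
  have "\<exists>z\<in>Zc. z \<noteq> \<one>"
  proof (rule ccontr)
    assume "\<not> (\<exists>z\<in>Zc. z \<noteq> \<one>)"
    hence "Zc \<subseteq> {\<one>}" by auto
    hence "card Zc \<le> 1" using card_mono[of "{\<one>}" Zc] by simp
    thus False using c3 by simp
  qed
  then obtain z where z: "z \<in> Zc" "z \<noteq> \<one>" by blast
  have zc: "z \<in> carrier G" using z Zs by auto
  have z1: "z \<notin> {\<one>}" using z by simp
  have z2: "z [^] (2::nat) \<notin> {\<one>}" using sq_in[OF fin o27 triv_subgroup zc] z1 by blast
  have inj: "\<forall>k k'::nat. k < 3 \<longrightarrow> k' < 3 \<longrightarrow> z [^] k = z [^] k' \<longrightarrow> k = k'"
    using coset_inj[OF triv_subgroup zc z1 z2, of _ _ \<one> \<one>] zc by simp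
  have injo: "inj_on (\<lambda>k::nat. z [^] k) {..<3}" using inj by (auto simp: inj_on_def)
  have sub: "(\<lambda>k::nat. z [^] k) ` {..<3} \<subseteq> Zc" using sub_pow_closed[OF Zc_subgroup z(1)] by auto
  have "card ((\<lambda>k::nat. z [^] k) ` {..<3}) = 3" using card_image[OF injo] by simp
  hence eqZ: "(\<lambda>k::nat. z [^] k) ` {..<3} = Zc"
    using card_subset_eq[OF finite_subset[OF Zs fin] sub] c3 by simp
  have all: "\<forall>c\<in>Zc. \<exists>k::nat<3. c = z [^] k" using eqZ by auto
  have "z [^] (3::nat) \<in> Zc" using sub_pow_closed[OF Zc_subgroup z(1)] by blast
  then obtain k :: nat where k: "k < 3" "z [^] (3::nat) = z [^] k" using all by blast
  have "z [^] k \<otimes> z [^] (3 - k) = z [^] k \<otimes> \<one>"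
    using k zc nat_pow_mult[of z k "3-k"] by simp
  hence k3: "z [^] (3 - k) = \<one>" using zc by (simp del: r_one)
  have "k = 0"
  proof (rule ccontr)
    assume "k \<noteq> 0"
    hence "k = 1 \<or> k = 2" using k by auto
    thus False using k3 z1 z2 zc by auto
  qed
  hence "z [^] (3::nat) = \<one>" using k by simp
  thus ?thesis using z all inj by blast
qed

lemma Cen_struct:
  assumes fin: "finite (carrier G)" and o27: "order G = 27" and c3: "card Zc = 3"
    and g: "g \<in> carrier G" "g \<notin> Zc"
  shows "card (Cen g) = 9 \<and> (\<forall>c\<in>Cen g. \<exists>i::nat<3. \<exists>w\<in>Zc. c = g [^] i \<otimes> w) \<and> g [^] (3::nat) \<in> Zc"
proof -
  have Zs: "Zc \<subseteq> carrier G" using Zc_subgroup subgroup.subset by blast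
  have fC: "finite (Cen g)" using fin unfolding Cen_def by simp
  have sub: "insert g Zc \<subseteq> Cen g" using Zc_sub_Cen[OF g(1)] g(1) unfolding Cen_def by auto
  have "card (insert g Zc) = 4" using c3 g(2) finite_subset[OF Zs fin] by simp
  hence ge: "4 \<le> card (Cen g)" using card_mono[OF fC sub] by simp
  have ne: "Cen g \<noteq> carrier G"
  proof
    assume "Cen g = carrier G"
    hence "g \<in> Zc" using g(1) unfolding Cen_def Zc_def by auto
    thus False using g by simp
  qed
  have "card (Cen g) < 27"
    using psubset_card_mono[OF fin, of "Cen g"] ne o27 unfolding order_def Cen_def by auto
  moreover have "card (Cen g) dvd 27" using sub_card_dvd[OF fin Cen_subgroup[OF g(1)]] o27 by simp
  ultimately have c9: "card (Cen g) = 9" using ge dvd27 by force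
  have gZ: "g \<notin> Zc" using g by simp
  have g2: "g [^] (2::nat) \<notin> Zc" using sq_in[OF fin o27 Zc_subgroup g(1)] gZ by blast
  have gC: "g \<in> Cen g" using sub by auto
  have cl: "g [^] j \<otimes> w \<in> Cen g" if "j < 3" "w \<in> Zc" for j :: nat and w
    using subgroup.m_closed[OF Cen_subgroup[OF g(1)] sub_pow_closed[OF Cen_subgroup[OF g(1)] gC]] 
      Zc_sub_Cen[OF g(1)] that by blast
  have dec: "\<forall>c\<in>Cen g. \<exists>i::nat<3. \<exists>w\<in>Zc. c = g [^] i \<otimes> w"
    using decomp[OF fC Zc_subgroup finite_subset[OF Zs fin] g(1) gZ g2 cl] c9 c3 by simp
  have "g [^] (3::nat) \<in> Cen g" using sub_pow_closed[OF Cen_subgroup[OF g(1)] gC] by blast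
  then obtain i :: nat and w where iw: "i < 3" "w \<in> Zc" "g [^] (3::nat) = g [^] i \<otimes> w" using dec by blast
  have wc: "w \<in> carrier G" using iw Zs by auto
  have "g [^] i \<otimes> g [^] (3 - i) = g [^] i \<otimes> w" using iw g(1) nat_pow_mult[of g i "3-i"] by simp
  hence gw: "g [^] (3 - i) = w" using g(1) wc by simp
  have "i = 0"
  proof (rule ccontr)
    assume "i \<noteq> 0"
    hence "i = 1 \<or> i = 2" using iw by auto
    thus False using gw iw(2) gZ g2 g(1) by auto
  qed
  hence "g [^] (3::nat) \<in> Zc" using gw iw by simp
  thus ?thesis using c9 dec by blast
qed

lemma perm_arg:
  assumes H: "subgroup H G" and y: "y \<in> carrier G" "y \<notin> H" "y [^] (2::nat) \<notin> H"
    and dec: "\<And>g. g \<in> carrier G \<Longrightarrow> \<exists>j::nat<3. \<exists>h\<in>H. g = y [^] j \<otimes> h"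
    and h: "h \<in> H" and n: "odd n" and cm: "h [^] (n::nat) \<otimes> y = y \<otimes> h [^] n"
  shows "\<exists>h'\<in>H. h \<otimes> y = y \<otimes> h'"
proof (rule ccontr)
  assume na: "\<not> (\<exists>h'\<in>H. h \<otimes> y = y \<otimes> h')"
  define inA where "inA j g \<longleftrightarrow> (\<exists>h'\<in>H. g = y [^] (j::nat) \<otimes> h')" for j g
  have Hc: "\<And>k. k \<in> H \<Longrightarrow> k \<in> carrier G" using H subgroup.subset by blast
  have hc: "h \<in> carrier G" using Hc h .
  have uniq: "j = j'" if "inA j g" "inA j' g" "j < 3" "j' < 3" for j j' g
    using that coset_inj[OF H y] unfolding inA_def by metis
  have y2: "y [^] (2::nat) = y \<otimes> y" using y(1) by (simp add: numeral_2_eq_2)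
  obtain j where j: "j < 3" "inA j (h \<otimes> y)" using dec[of "h \<otimes> y"] hc y(1) unfolding inA_def by auto
  have j0: "j \<noteq> 0"
  proof
    assume "j = 0"
    then obtain k where k0: "k \<in> H" "h \<otimes> y = y [^] (0::nat) \<otimes> k" using j unfolding inA_def by auto
    hence k: "k \<in> H" "h \<otimes> y = k" using Hc[OF k0(1)] by auto
    hence "y = inv h \<otimes> k" using hc y(1) by (metis inv_cancel_l)
    thus False using y(2) k(1) h H by (metis subgroup.m_closed subgroup.m_inv_closed)
  qed
  have j1: "j \<noteq> 1" using j na y(1) unfolding inA_def by auto
  hence "j = 2" using j j0 by auto
  then obtain h1 where h1: "h1 \<in> H" "h \<otimes> y = y \<otimes> y \<otimes> h1" using j y2 unfolding inA_def by auto
  have h1c: "h1 \<in> carrier G" using Hc h1 by blast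
  obtain j2 where j2: "j2 < 3" "inA j2 (h \<otimes> (y \<otimes> y))" using dec[of "h \<otimes> (y \<otimes> y)"] hc y(1) unfolding inA_def by auto
  have "j2 \<noteq> 0"
  proof
    assume "j2 = 0"
    then obtain k where k0: "k \<in> H" "h \<otimes> (y \<otimes> y) = y [^] (0::nat) \<otimes> k" using j2 unfolding inA_def by auto
    hence k: "k \<in> H" "h \<otimes> (y \<otimes> y) = k" using Hc[OF k0(1)] by auto
    hence "y \<otimes> y = inv h \<otimes> k" using hc y(1) by (metis inv_cancel_l m_closed)
    thus False using y(3) y2 k(1) h H by (metis subgroup.m_closed subgroup.m_inv_closed)
  qed
  moreover have "j2 \<noteq> 2"
  proof
    assume "j2 = 2"
    then obtain k where k: "k \<in> H" "h \<otimes> (y \<otimes> y) = y \<otimes> y \<otimes> k" using j2 y2 unfolding inA_def by auto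
    have kc: "k \<in> carrier G" using Hc k by blast
    have "h \<otimes> (y \<otimes> y) = y \<otimes> y \<otimes> (h1 \<otimes> y)" using h1 hc y(1) h1c by (simp add: m_assoc[symmetric])
    hence "y \<otimes> y \<otimes> (h1 \<otimes> y) = y \<otimes> y \<otimes> k" using k by simp
    hence "h1 \<otimes> y = k" using y(1) h1c kc by simp
    hence "y = inv h1 \<otimes> k" using h1c y(1) by (metis inv_cancel_l)
    thus False using y(2) k(1) h1(1) H by (metis subgroup.m_closed subgroup.m_inv_closed)
  qed
  ultimately have "j2 = 1" using j2 by auto
  then obtain h2 where h2: "h2 \<in> H" "h \<otimes> (y \<otimes> y) = y \<otimes> h2" using j2 y(1) unfolding inA_def by auto
  have h2c: "h2 \<in> carrier G" using Hc h2 by blast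
  have s1: "inA 2 (h \<otimes> u)" if u1: "inA 1 u" for u
  proof -
    obtain k where k: "k \<in> H" "u = y \<otimes> k" using u1 y(1) unfolding inA_def by auto
    have kc: "k \<in> carrier G" using Hc k by blast
    have "h \<otimes> u = y \<otimes> y \<otimes> (h1 \<otimes> k)" using k h1 hc y(1) kc h1c by (simp add: m_assoc[symmetric])
    thus ?thesis unfolding inA_def using y2 k h1 H subgroup.m_closed by fastforce
  qed
  have s2: "inA 1 (h \<otimes> u)" if u2: "inA 2 u" for u
  proof -
    obtain k where k: "k \<in> H" "u = y \<otimes> y \<otimes> k" using u2 y2 unfolding inA_def by auto
    have kc: "k \<in> carrier G" using Hc k by blast
    have "h \<otimes> u = h \<otimes> (y \<otimes> y) \<otimes> k" using k hc y(1) kc by (simp add: m_assoc)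
    also have "\<dots> = y \<otimes> (h2 \<otimes> k)" using h2 y(1) h2c kc by (simp add: m_assoc)
    finally show ?thesis unfolding inA_def using y(1) k h2 subgroup.m_closed[OF H] by auto
  qed
  have ind: "(even m \<longrightarrow> inA 1 (h [^] m \<otimes> y)) \<and> (odd m \<longrightarrow> inA 2 (h [^] m \<otimes> y))" for m :: nat
  proof (induction m)
    case 0
    have "y = y [^] (1::nat) \<otimes> \<one>" using y(1) by simp
    thus ?case unfolding inA_def using subgroup.one_closed[OF H] y(1) by (auto intro!: bexI[of _ \<one>])
  next
    case (Suc m)
    have p: "h [^] (Suc m) = h \<otimes> h [^] m" using hc by (rule nat_pow_Suc2)
    have e: "h [^] (Suc m) \<otimes> y = h \<otimes> (h [^] m \<otimes> y)" unfolding p using hc y(1) by (simp add: m_assoc)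
    show ?case unfolding e using Suc s1 s2 by auto
  qed
  have "inA 2 (h [^] n \<otimes> y)" using ind n by blast
  moreover have "inA 1 (h [^] n \<otimes> y)" unfolding cm inA_def using sub_pow_closed[OF H h] y(1) by auto
  ultimately show False using uniq[of 2 _ 1] by auto
qed

end


definition phi27 :: "('a,'b) monoid_scheme \<Rightarrow> 'a \<Rightarrow> 'a \<Rightarrow> 'a \<Rightarrow> nat\<times>nat\<times>nat \<Rightarrow> 'a" where
  "phi27 G x y z p = (case p of (j,i,k) \<Rightarrow> y [^]\<^bsub>G\<^esub> j \<otimes>\<^bsub>G\<^esub> x [^]\<^bsub>G\<^esub> i \<otimes>\<^bsub>G\<^esub> z [^]\<^bsub>G\<^esub> k)"

definition phi39 :: "('a,'b) monoid_scheme \<Rightarrow> 'a \<Rightarrow> 'a \<Rightarrow> nat\<times>nat \<Rightarrow> 'a" where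
  "phi39 G x y p = (case p of (j,i) \<Rightarrow> y [^]\<^bsub>G\<^esub> j \<otimes>\<^bsub>G\<^esub> x [^]\<^bsub>G\<^esub> i)"

context group begin

lemma pow_mod:
  assumes g: "g \<in> carrier G" and p: "g [^] (m::nat) = \<one>"
  shows "g [^] (n::nat) = g [^] (n mod m)"
proof -
  have "g [^] n = g [^] (m * (n div m) + n mod m)" by simp
  also have "\<dots> = g [^] (m * (n div m)) \<otimes> g [^] (n mod m)"
    using g nat_pow_mult[of g "m * (n div m)" "n mod m"] by simp
  also have "\<dots> = (g [^] m) [^] (n div m) \<otimes> g [^] (n mod m)"
    using g by (simp add: nat_pow_pow)
  finally show ?thesis using p g by simp
qed

lemma central_pow:
  assumes z: "z \<in> carrier G" and zc: "\<forall>g\<in>carrier G. g \<otimes> z = z \<otimes> g" and g: "g \<in> carrier G"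
  shows "g \<otimes> z [^] (n::nat) = z [^] n \<otimes> g"
  using group_commutes_pow[of z g n] zc z g by simp

lemma hom27:
  assumes xyz: "x \<in> carrier G" "y \<in> carrier G" "z \<in> carrier G"
    and zc: "\<forall>g\<in>carrier G. g \<otimes> z = z \<otimes> g" and z3: "z [^] (3::nat) = \<one>"
    and x3: "x [^] (3::nat) = z [^] (al::nat)" and y3: "y [^] (3::nat) = z [^] (be::nat)"
    and rel: "x \<otimes> y = y \<otimes> x [^] (a::nat) \<otimes> z [^] (b::nat)"
  shows "phi27 G x y z (mul27 a b al be p q) = phi27 G x y z p \<otimes> phi27 G x y z q"
proof -
  note xc = xyz(1) and yc = xyz(2) and zcar = xyz(3)
  have Zm: "z [^] n = z [^] (n mod 3)" for n :: nat using pow_mod[OF zcar z3] .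
  have ZC: "g \<otimes> z [^] n = z [^] n \<otimes> g" if "g \<in> carrier G" for g and n :: nat
    using central_pow[OF zcar zc that] .
  have Xm: "x [^] n = x [^] (n mod 3) \<otimes> z [^] (al * (n div 3))" for n :: nat
  proof -
    have "x [^] n = x [^] (3 * (n div 3) + n mod 3)" by simp
    also have "\<dots> = x [^] (3 * (n div 3)) \<otimes> x [^] (n mod 3)"
      using xc nat_pow_mult[of x "3 * (n div 3)" "n mod 3"] by simp
    also have "\<dots> = (x [^] (3::nat)) [^] (n div 3) \<otimes> x [^] (n mod 3)"
      using xc by (simp add: nat_pow_pow)
    also have "\<dots> = z [^] (al * (n div 3)) \<otimes> x [^] (n mod 3)"
      using zcar by (simp add: x3 nat_pow_pow)
    also have "\<dots> = x [^] (n mod 3) \<otimes> z [^] (al * (n div 3))" using ZC[of "x [^] (n mod 3)"] xc by simp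
    finally show ?thesis .
  qed
  have L3: "x [^] i \<otimes> y = y \<otimes> x [^] (a * i) \<otimes> z [^] (b * i)" for i :: nat
  proof (induction i)
    case 0 thus ?case using yc by simp
  next
    case (Suc i)
    have "x [^] Suc i \<otimes> y = x [^] i \<otimes> (x \<otimes> y)" using xc yc by (simp add: m_assoc)
    also have "\<dots> = (x [^] i \<otimes> y) \<otimes> x [^] a \<otimes> z [^] b" using xc yc zcar by (simp add: rel m_assoc)
    also have "\<dots> = y \<otimes> x [^] (a * i) \<otimes> (z [^] (b * i) \<otimes> x [^] a) \<otimes> z [^] b"
      using xc yc zcar by (simp add: Suc m_assoc)
    also have "\<dots> = y \<otimes> x [^] (a * i) \<otimes> (x [^] a \<otimes> z [^] (b * i)) \<otimes> z [^] b"
      using ZC[of "x [^] a" "b * i"] xc by simp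
    also have "\<dots> = y \<otimes> (x [^] (a * i) \<otimes> x [^] a) \<otimes> (z [^] (b * i) \<otimes> z [^] b)"
      using xc yc zcar by (simp add: m_assoc)
    also have "\<dots> = y \<otimes> x [^] (a * Suc i) \<otimes> z [^] (b * Suc i)"
      using xc zcar by (simp add: nat_pow_mult add.commute)
    finally show ?case .
  qed
  have L4: "phi27 G x y z (ry27 a b al be p) = phi27 G x y z p \<otimes> y" for p
  proof -
    obtain j i k where p: "p = (j,i,k)" by (cases p) auto
    define m where "m = (a * i) mod 3"
    define q where "q = (a * i) div 3"
    have "phi27 G x y z p \<otimes> y = y [^] j \<otimes> x [^] i \<otimes> (z [^] k \<otimes> y)"
      unfolding p phi27_def using xc yc zcar by (simp add: m_assoc)
    also have "\<dots> = y [^] j \<otimes> (x [^] i \<otimes> y) \<otimes> z [^] k"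
      using ZC[OF yc, of k] xc yc zcar by (simp add: m_assoc)
    also have "\<dots> = (y [^] j \<otimes> y) \<otimes> x [^] (a*i) \<otimes> (z [^] (b*i) \<otimes> z [^] k)"
      using xc yc zcar by (simp add: L3 m_assoc)
    also have "\<dots> = y [^] Suc j \<otimes> (x [^] m \<otimes> z [^] (al*q)) \<otimes> z [^] (b*i + k)"
      using xc yc zcar Xm[of "a*i"] by (simp add: nat_pow_mult m_def q_def)
    also have "\<dots> = y [^] Suc j \<otimes> x [^] m \<otimes> z [^] (k + b*i + al*q)"
      using xc yc zcar by (simp add: m_assoc nat_pow_mult add_ac)
    finally have e: "phi27 G x y z p \<otimes> y = y [^] Suc j \<otimes> x [^] m \<otimes> z [^] (k + b*i + al*q)" .
    show ?thesis
    proof (cases "j = 2")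
      case True
      have "y [^] Suc j \<otimes> x [^] m \<otimes> z [^] (k + b*i + al*q) = z [^] be \<otimes> x [^] m \<otimes> z [^] (k + b*i + al*q)"
        using True y3 by (simp add: numeral_3_eq_3)
      also have "\<dots> = x [^] m \<otimes> z [^] be \<otimes> z [^] (k + b*i + al*q)"
        using ZC[of "x [^] m" be] xc zcar by simp
      also have "\<dots> = x [^] m \<otimes> (z [^] be \<otimes> z [^] (k + b*i + al*q))"
        using xc zcar by (simp add: m_assoc)
      also have "\<dots> = \<one> \<otimes> x [^] m \<otimes> z [^] ((k + be + b*i + al*q) mod 3)"
        using xc zcar Zm[of "k + be + b*i + al*q"] by (simp add: nat_pow_mult add_ac)
      finally show ?thesis using e True unfolding p phi27_def m_def q_def by simp
    next
      case False
      have "y [^] Suc j \<otimes> x [^] m \<otimes> z [^] (k + b*i + al*q) = y [^] (j+1) \<otimes> x [^] m \<otimes> z [^] ((k + b*i + al*q) mod 3)"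
        using Zm[of "k + b*i + al*q"] by simp
      thus ?thesis using e False unfolding p phi27_def m_def q_def by simp
    qed
  qed
  have L5: "phi27 G x y z (mxz27 al p i' k') = phi27 G x y z p \<otimes> x [^] i' \<otimes> z [^] k'" for p i' k'
  proof -
    obtain j i k where p: "p = (j,i,k)" by (cases p) auto
    define m where "m = (i + i') mod 3"
    define q where "q = (i + i') div 3"
    have "phi27 G x y z p \<otimes> x [^] i' \<otimes> z [^] k' = y [^] j \<otimes> x [^] i \<otimes> (z [^] k \<otimes> x [^] i') \<otimes> z [^] k'"
      unfolding p phi27_def using xc yc zcar by (simp add: m_assoc)
    also have "\<dots> = y [^] j \<otimes> x [^] i \<otimes> (x [^] i' \<otimes> z [^] k) \<otimes> z [^] k'"
      using ZC[of "x [^] i'" k] xc by simp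
    also have "\<dots> = y [^] j \<otimes> (x [^] i \<otimes> x [^] i') \<otimes> (z [^] k \<otimes> z [^] k')"
      using xc yc zcar by (simp add: m_assoc)
    also have "\<dots> = y [^] j \<otimes> (x [^] m \<otimes> z [^] (al * q)) \<otimes> z [^] (k + k')"
      using xc zcar Xm[of "i+i'"] by (simp add: nat_pow_mult m_def q_def)
    also have "\<dots> = y [^] j \<otimes> x [^] m \<otimes> z [^] ((k + k' + al * q) mod 3)"
      using xc yc zcar Zm[of "k + k' + al * q"] by (simp add: m_assoc nat_pow_mult add_ac)
    finally show ?thesis unfolding p phi27_def m_def q_def by simp
  qed
  have L6: "phi27 G x y z ((ry27 a b al be ^^ n) p) = phi27 G x y z p \<otimes> y [^] n" for n p
  proof (induction n)
    case 0 thus ?case using xc yc zcar by (simp add: phi27_def split: prod.split)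
  next
    case (Suc n)
    have pc: "phi27 G x y z p \<in> carrier G" using xc yc zcar by (simp add: phi27_def split: prod.split)
    show ?case using Suc L4 pc yc by (simp add: m_assoc)
  qed
  obtain j i k where q: "q = (j,i,k)" by (cases q) auto
  have pc: "phi27 G x y z p \<in> carrier G" using xc yc zcar by (simp add: phi27_def split: prod.split)
  show ?thesis unfolding q using L5 L6 pc xc yc zcar by (simp add: phi27_def m_assoc)
qed

lemma hom39:
  assumes xc: "x \<in> carrier G" and yc: "y \<in> carrier G"
    and x13: "x [^] (13::nat) = \<one>" and y3: "y [^] (3::nat) = \<one>"
    and rel: "x \<otimes> y = y \<otimes> x [^] (r::nat)"
  shows "phi39 G x y (mul39 r p q) = phi39 G x y p \<otimes> phi39 G x y q"
proof -
  have Xm: "x [^] n = x [^] (n mod 13)" for n :: nat using pow_mod[OF xc x13] .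
  have Ym: "y [^] n = y [^] (n mod 3)" for n :: nat using pow_mod[OF yc y3] .
  have L3: "x [^] i \<otimes> y = y \<otimes> x [^] (r * i)" for i :: nat
  proof (induction i)
    case 0 thus ?case using yc by simp
  next
    case (Suc i)
    have "x [^] Suc i \<otimes> y = x [^] i \<otimes> (x \<otimes> y)" using xc yc by (simp add: m_assoc)
    also have "\<dots> = (x [^] i \<otimes> y) \<otimes> x [^] r" using xc yc by (simp add: rel m_assoc)
    also have "\<dots> = y \<otimes> (x [^] (r * i) \<otimes> x [^] r)" using xc yc by (simp add: Suc m_assoc)
    also have "\<dots> = y \<otimes> x [^] (r * Suc i)" using xc by (simp add: nat_pow_mult add.commute)
    finally show ?case .
  qed
  have L4: "phi39 G x y (ry39 r p) = phi39 G x y p \<otimes> y" for p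
  proof -
    obtain j i where p: "p = (j,i)" by (cases p) auto
    have "phi39 G x y p \<otimes> y = y [^] j \<otimes> (x [^] i \<otimes> y)"
      unfolding p phi39_def using xc yc by (simp add: m_assoc)
    also have "\<dots> = (y [^] j \<otimes> y) \<otimes> x [^] (r * i)" using xc yc by (simp add: L3 m_assoc)
    also have "\<dots> = y [^] ((j+1) mod 3) \<otimes> x [^] ((i * r) mod 13)"
      using Ym[of "Suc j"] Xm[of "r * i"] by (simp add: mult.commute)
    finally show ?thesis unfolding p phi39_def by simp
  qed
  have pc: "phi39 G x y p \<in> carrier G" for p using xc yc by (simp add: phi39_def split: prod.split)
  have L6: "phi39 G x y ((ry39 r ^^ n) p) = phi39 G x y p \<otimes> y [^] n" for n p
  proof (induction n)
    case 0 thus ?case using pc by simp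
  next
    case (Suc n)
    show ?case using Suc L4 pc yc by (simp add: m_assoc)
  qed
  obtain j i where q: "q = (j,i)" by (cases q) auto
  obtain j0 i0 where r: "(ry39 r ^^ j) p = (j0, i0)" by (cases "(ry39 r ^^ j) p") auto
  have "phi39 G x y (mul39 r p q) = y [^] j0 \<otimes> x [^] (i0 + i)"
    unfolding q using r Xm[of "i0+i"] by (simp add: phi39_def)
  also have "\<dots> = phi39 G x y ((ry39 r ^^ j) p) \<otimes> x [^] i"
    unfolding r phi39_def using xc yc by (simp add: nat_pow_mult[symmetric] m_assoc)
  also have "\<dots> = (phi39 G x y p \<otimes> y [^] j) \<otimes> x [^] i" by (simp add: L6)
  also have "\<dots> = phi39 G x y p \<otimes> (y [^] j \<otimes> x [^] i)" using pc xc yc by (simp add: m_assoc)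
  also have "\<dots> = phi39 G x y p \<otimes> phi39 G x y q" unfolding q phi39_def by simp
  finally show ?thesis .
qed

lemma struct27:
  assumes fin: "finite (carrier G)" and o27: "order G = 27" and nc: "\<not> comm_group G"
  shows "\<exists>x y z a b al be. x \<in> carrier G \<and> y \<in> carrier G \<and> z \<in> carrier G \<and>
     (\<forall>g\<in>carrier G. g \<otimes> z = z \<otimes> g) \<and> z [^] (3::nat) = \<one> \<and>
     x [^] (3::nat) = z [^] (al::nat) \<and> y [^] (3::nat) = z [^] (be::nat) \<and>
     x \<otimes> y = y \<otimes> x [^] (a::nat) \<otimes> z [^] (b::nat) \<and> a < 3 \<and> b < 3 \<and> al < 3 \<and> be < 3 \<and>
     x \<otimes> y \<noteq> y \<otimes> x \<and> inj_on (phi27 G x y z) (set D27) \<and> phi27 G x y z ` set D27 = carrier G"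
proof -
  have c3: "card Zc = 3" using card_Zc3[OF fin o27 nc] .
  have Zs: "Zc \<subseteq> carrier G" using Zc_subgroup subgroup.subset by blast
  obtain z where z: "z \<in> Zc" "z \<noteq> \<one>" "z [^] (3::nat) = \<one>"
    and zall: "\<forall>c\<in>Zc. \<exists>k::nat<3. c = z [^] k"
    and zinj: "\<forall>k k'::nat. k < 3 \<longrightarrow> k' < 3 \<longrightarrow> z [^] k = z [^] k' \<longrightarrow> k = k'"
    using Zc_gen[OF fin o27 c3] by blast
  have zc: "z \<in> carrier G" using z Zs by auto
  have zcen: "\<forall>g\<in>carrier G. g \<otimes> z = z \<otimes> g" using z(1) unfolding Zc_def by auto
  obtain x y where xy: "x \<in> carrier G" "y \<in> carrier G" "x \<otimes> y \<noteq> y \<otimes> x"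
  proof -
    have "\<not> (\<forall>x\<in>carrier G. \<forall>y\<in>carrier G. x \<otimes> y = y \<otimes> x)"
      using nc group_comm_groupI by blast
    thus ?thesis using that by blast
  qed
  have xZ: "x \<notin> Zc" using xy unfolding Zc_def by (auto intro!: bexI[of _ y])
  have yZ: "y \<notin> Zc" using xy unfolding Zc_def by auto
  have yC: "y \<notin> Cen x" using xy unfolding Cen_def by auto
  have xC: "x \<in> Cen x" using xy(1) unfolding Cen_def by auto
  have CX: "card (Cen x) = 9" "\<forall>c\<in>Cen x. \<exists>i::nat<3. \<exists>w\<in>Zc. c = x [^] i \<otimes> w" "x [^] (3::nat) \<in> Zc"
    using Cen_struct[OF fin o27 c3 xy(1) xZ] by auto
  have CY: "y [^] (3::nat) \<in> Zc" using Cen_struct[OF fin o27 c3 xy(2) yZ] by auto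
  obtain al :: nat where al: "al < 3" "x [^] (3::nat) = z [^] al" using zall CX(3) by blast
  obtain be :: nat where be: "be < 3" "y [^] (3::nat) = z [^] be" using zall CY by blast
  have y2: "y [^] (2::nat) \<notin> Cen x" using sq_in[OF fin o27 Cen_subgroup[OF xy(1)] xy(2)] yC by blast
  have x2: "x [^] (2::nat) \<notin> Zc" using sq_in[OF fin o27 Zc_subgroup xy(1)] xZ by blast
  have Cs: "Cen x \<subseteq> carrier G" unfolding Cen_def by auto
  have decG: "\<And>g. g \<in> carrier G \<Longrightarrow> \<exists>j::nat<3. \<exists>h\<in>Cen x. g = y [^] j \<otimes> h"
    using decomp[OF fin Cen_subgroup[OF xy(1)] finite_subset[OF Cs fin] xy(2) yC y2] CX(1) o27
    unfolding order_def using Cs xy(2) by (auto intro!: m_closed)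
  have cm: "x [^] (3::nat) \<otimes> y = y \<otimes> x [^] (3::nat)" using CX(3) xy(2) unfolding Zc_def by auto
  obtain h' where h': "h' \<in> Cen x" "x \<otimes> y = y \<otimes> h'"
    using perm_arg[OF Cen_subgroup[OF xy(1)] xy(2) yC y2 decG xC _ cm] by auto
  obtain a :: nat and w where aw: "a < 3" "w \<in> Zc" "h' = x [^] a \<otimes> w" using CX(2) h'(1) by blast
  obtain b :: nat where b: "b < 3" "w = z [^] b" using zall aw(2) by blast
  have rel: "x \<otimes> y = y \<otimes> x [^] a \<otimes> z [^] b" using h' aw b xy zc by (simp add: m_assoc)
  have phi_alt: "phi27 G x y z (j,i,k) = y [^] j \<otimes> (x [^] i \<otimes> z [^] k)" for j i k
    unfolding phi27_def using xy zc by (simp add: m_assoc)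
  have xzC: "x [^] i \<otimes> z [^] k \<in> Cen x" for i k :: nat
    using subgroup.m_closed[OF Cen_subgroup[OF xy(1)] sub_pow_closed[OF Cen_subgroup[OF xy(1)] xC]
       subsetD[OF Zc_sub_Cen[OF xy(1)] sub_pow_closed[OF Zc_subgroup z(1)]]] .
  have inj: "inj_on (phi27 G x y z) (set D27)"
  proof (rule inj_onI)
    fix p q assume p: "p \<in> set D27" and q: "q \<in> set D27" and e: "phi27 G x y z p = phi27 G x y z q"
    obtain j i k where pp: "p = (j,i,k)" by (cases p) auto
    obtain j' i' k' where qq: "q = (j',i',k')" by (cases q) auto
    have r: "j < 3" "i < 3" "k < 3" "j' < 3" "i' < 3" "k' < 3" using p q pp qq set_D27 by auto
    have e1: "j = j' \<and> x [^] i \<otimes> z [^] k = x [^] i' \<otimes> z [^] k'"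
      using coset_inj[OF Cen_subgroup[OF xy(1)] xy(2) yC y2 r(1) r(4) xzC xzC] e
      unfolding pp qq phi_alt by blast
    have e2: "i = i' \<and> z [^] k = z [^] k'"
      using coset_inj[OF Zc_subgroup xy(1) xZ x2 r(2) r(5) sub_pow_closed[OF Zc_subgroup z(1)] sub_pow_closed[OF Zc_subgroup z(1)]] e1
      by blast
    have "k = k'" using zinj e2 r by blast
    thus "p = q" using e1 e2 pp qq by simp
  qed
  have surj: "phi27 G x y z ` set D27 = carrier G"
  proof
    show "phi27 G x y z ` set D27 \<subseteq> carrier G" using xy zc by (auto simp: phi27_def)
    show "carrier G \<subseteq> phi27 G x y z ` set D27"
    proof
      fix g assume g: "g \<in> carrier G"
      obtain j :: nat and h where jh: "j < 3" "h \<in> Cen x" "g = y [^] j \<otimes> h" using decG[OF g] by blast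
      obtain i :: nat and w where iw: "i < 3" "w \<in> Zc" "h = x [^] i \<otimes> w" using CX(2) jh(2) by blast
      obtain k :: nat where k: "k < 3" "w = z [^] k" using zall iw(2) by blast
      have "g = phi27 G x y z (j,i,k)" using jh iw k phi_alt by simp
      moreover have "(j,i,k) \<in> set D27" using jh iw k set_D27 by simp
      ultimately show "g \<in> phi27 G x y z ` set D27" by blast
    qed
  qed
  show ?thesis
    apply (rule exI[of _ x], rule exI[of _ y], rule exI[of _ z], rule exI[of _ a], rule exI[of _ b],
        rule exI[of _ al], rule exI[of _ be])
    using xy zc zcen z(3) al be rel aw(1) b(1) inj surj by simp
qed

lemma sub_pow_card:
  assumes H: "subgroup H G" and g: "g \<in> H"
  shows "g [^] card H = \<one>"
proof -
  interpret K: group "G\<lparr>carrier := H\<rparr>" using subgroup.subgroup_is_group[OF H is_group] .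
  have "g [^]\<^bsub>G\<lparr>carrier := H\<rparr>\<^esub> order (G\<lparr>carrier := H\<rparr>) = \<one>\<^bsub>G\<lparr>carrier := H\<rparr>\<^esub>"
    using K.pow_order_eq_1[of g] g by simp
  thus ?thesis unfolding order_def using nat_pow_consistent[of g "card H" H] by simp
qed

lemma prime_dvd_cases: "(d::nat) dvd 13 \<Longrightarrow> d = 1 \<or> d = 13"
proof -
  assume d: "d dvd 13"
  hence "d < 14" using dvd_imp_le[of d 13] by simp
  hence "d \<in> set (filter (\<lambda>d. d dvd (13::nat)) [0..<14])" using d by simp
  also have "filter (\<lambda>d. d dvd (13::nat)) [0..<14] = [1,13]" by code_simp
  finally show ?thesis by simp
qed

lemma prime_dvd_cases3: "(d::nat) dvd 3 \<Longrightarrow> d = 1 \<or> d = 3"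
proof -
  assume d: "d dvd 3"
  hence "d < 4" using dvd_imp_le[of d 3] by simp
  hence "d \<in> set (filter (\<lambda>d. d dvd (3::nat)) [0..<4])" using d by simp
  also have "filter (\<lambda>d. d dvd (3::nat)) [0..<4] = [1,3]" by code_simp
  finally show ?thesis by simp
qed

lemma ry39_1: "j < 3 \<Longrightarrow> i < 13 \<Longrightarrow> (ry39 (Suc 0) ^^ n) (j,i) = ((j + n) mod 3, i)"
proof (induction n)
  case 0 thus ?case by simp
next
  case (Suc n) thus ?case by (simp add: mod_Suc)
qed

lemma mul39_1_comm: "p \<in> set D39 \<Longrightarrow> q \<in> set D39 \<Longrightarrow> mul39 1 p q = mul39 1 q p"
  by (cases p, cases q) (auto simp: set_D39 ry39_1 add.commute One_nat_def)

lemma struct39: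
  assumes fin: "finite (carrier G)" and o39: "order G = 39" and nc: "\<not> comm_group G"
  shows "\<exists>x y r. x \<in> carrier G \<and> y \<in> carrier G \<and> x [^] (13::nat) = \<one> \<and> y [^] (3::nat) = \<one> \<and>
     x \<otimes> y = y \<otimes> x [^] (r::nat) \<and> r < 13 \<and> r \<noteq> 1 \<and>
     inj_on (phi39 G x y) (set D39) \<and> phi39 G x y ` set D39 = carrier G"
proof -
  obtain P where P: "subgroup P G" "card P = 13"
    using sylow_thm[of 13 G 1 3] is_group fin o39 by auto
  obtain Q where Q: "subgroup Q G" "card Q = 3"
    using sylow_thm[of 3 G 1 13] is_group fin o39 by auto
  have Ps: "P \<subseteq> carrier G" using P subgroup.subset by blast
  have Qs: "Q \<subseteq> carrier G" using Q subgroup.subset by blast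
  have P13: "g [^] (13::nat) = \<one>" if "g \<in> P" for g using sub_pow_card[OF P(1) that] P(2) by simp
  have Q3: "g [^] (3::nat) = \<one>" if "g \<in> Q" for g using sub_pow_card[OF Q(1) that] Q(2) by simp
  have "\<exists>x\<in>P. x \<noteq> \<one>"
  proof (rule ccontr)
    assume "\<not> (\<exists>x\<in>P. x \<noteq> \<one>)"
    hence "P \<subseteq> {\<one>}" by auto
    hence "card P \<le> 1" using card_mono[of "{\<one>}" P] by simp
    thus False using P by simp
  qed
  then obtain x where x: "x \<in> P" "x \<noteq> \<one>" by blast
  have "\<exists>y\<in>Q. y \<noteq> \<one>"
  proof (rule ccontr)
    assume "\<not> (\<exists>y\<in>Q. y \<noteq> \<one>)"
    hence "Q \<subseteq> {\<one>}" by auto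
    hence "card Q \<le> 1" using card_mono[of "{\<one>}" Q] by simp
    thus False using Q by simp
  qed
  then obtain y where y: "y \<in> Q" "y \<noteq> \<one>" by blast
  have xc: "x \<in> carrier G" using x Ps by auto
  have yc: "y \<in> carrier G" using y Qs by auto
  have ox: "ord x = 13"
  proof -
    have "ord x dvd 13" using pow_eq_id[OF xc] P13[OF x(1)] by simp
    moreover have "ord x \<noteq> 1" using ord_eq_1[OF xc] x(2) by simp
    ultimately show ?thesis using prime_dvd_cases by blast
  qed
  have oy: "ord y = 3"
  proof -
    have "ord y dvd 3" using pow_eq_id[OF yc] Q3[OF y(1)] by simp
    moreover have "ord y \<noteq> 1" using ord_eq_1[OF yc] y(2) by simp
    ultimately show ?thesis using prime_dvd_cases3 by blast
  qed
  have x13: "x [^] (13::nat) = \<one>" using P13 x by simp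
  have y3: "y [^] (3::nat) = \<one>" using Q3 y by simp
  have xinj: "inj_on (\<lambda>n::nat. x [^] n) {..<13}"
    using ord_inj[OF xc] ox by (simp add: atLeast0AtMost lessThan_Suc_atMost[symmetric])
  have Psub: "(\<lambda>n::nat. x [^] n) ` {..<13} \<subseteq> P" using sub_pow_closed[OF P(1) x(1)] by auto
  have "card ((\<lambda>n::nat. x [^] n) ` {..<13}) = 13" using card_image[OF xinj] by simp
  hence Peq: "(\<lambda>n::nat. x [^] n) ` {..<13} = P"
    using card_subset_eq[OF finite_subset[OF Ps fin] Psub] P(2) by simp
  have yP: "y \<notin> P"
  proof
    assume yP: "y \<in> P"
    have "ord y dvd 13" using pow_eq_id[OF yc, of 13] P13[OF yP] by simp
    thus False using oy by simp
  qed
  have y2P: "y [^] (2::nat) \<notin> P"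
  proof
    assume "y [^] (2::nat) \<in> P"
    hence "(y [^] (2::nat)) [^] (13::nat) = \<one>" using P13 by simp
    hence "y [^] (26::nat) = \<one>" using yc by (simp add: nat_pow_pow)
    hence "ord y dvd 26" using pow_eq_id[OF yc] by simp
    thus False using oy by simp
  qed
  have decG: "\<And>g. g \<in> carrier G \<Longrightarrow> \<exists>j::nat<3. \<exists>h\<in>P. g = y [^] j \<otimes> h"
    using decomp[OF fin P(1) finite_subset[OF Ps fin] yc yP y2P] P(2) o39
    unfolding order_def using Ps yc by (auto intro!: m_closed)
  have cm: "x [^] (13::nat) \<otimes> y = y \<otimes> x [^] (13::nat)" using x13 yc by simp
  obtain h' where h': "h' \<in> P" "x \<otimes> y = y \<otimes> h'"
    using perm_arg[OF P(1) yc yP y2P decG x(1) _ cm] by auto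
  obtain r :: nat where r: "r < 13" "h' = x [^] r" using h'(1) Peq by auto
  have rel: "x \<otimes> y = y \<otimes> x [^] r" using h' r by simp
  have inj: "inj_on (phi39 G x y) (set D39)"
  proof (rule inj_onI)
    fix p q assume p: "p \<in> set D39" and q: "q \<in> set D39" and e: "phi39 G x y p = phi39 G x y q"
    obtain j i where pp: "p = (j,i)" by (cases p) auto
    obtain j' i' where qq: "q = (j',i')" by (cases q) auto
    have rr: "j < 3" "i < 13" "j' < 3" "i' < 13" using p q pp qq set_D39 by auto
    have e': "y [^] j \<otimes> x [^] i = y [^] j' \<otimes> x [^] i'" using e unfolding pp qq phi39_def by simp
    have e1: "j = j' \<and> x [^] i = x [^] i'"
      using coset_inj[OF P(1) yc yP y2P rr(1) rr(3) sub_pow_closed[OF P(1) x(1), of i] sub_pow_closed[OF P(1) x(1), of i'] e'] .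
    have "i = i'" using e1 xinj rr unfolding inj_on_def by blast
    thus "p = q" using e1 pp qq by simp
  qed
  have surj: "phi39 G x y ` set D39 = carrier G"
  proof
    show "phi39 G x y ` set D39 \<subseteq> carrier G" using xc yc by (auto simp: phi39_def)
    show "carrier G \<subseteq> phi39 G x y ` set D39"
    proof
      fix g assume g: "g \<in> carrier G"
      obtain j :: nat and h where jh: "j < 3" "h \<in> P" "g = y [^] j \<otimes> h" using decG[OF g] by blast
      obtain i :: nat where i: "i < 13" "h = x [^] i" using jh(2) Peq by auto
      have "g = phi39 G x y (j,i)" using jh i by (simp add: phi39_def)
      moreover have "(j,i) \<in> set D39" using jh i set_D39 by simp
      ultimately show "g \<in> phi39 G x y ` set D39" by blast
    qed
  qed
  have r1: "r \<noteq> 1"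
  proof
    assume r1: "r = 1"
    have hom: "phi39 G x y (mul39 1 p q) = phi39 G x y p \<otimes> phi39 G x y q" for p q
      using hom39[OF xc yc x13 y3 rel] r1 by simp
    have "comm_group G"
    proof (rule group_comm_groupI)
      fix g h assume g: "g \<in> carrier G" and h: "h \<in> carrier G"
      obtain p where p: "p \<in> set D39" "g = phi39 G x y p" using g surj by blast
      obtain q where q: "q \<in> set D39" "h = phi39 G x y q" using h surj by blast
      show "g \<otimes> h = h \<otimes> g" using hom[of p q] hom[of q p] mul39_1_comm[OF p(1) q(1)] p q by simp
    qed
    thus False using nc by simp
  qed
  show ?thesis using xc yc x13 y3 rel r(1) r1 inj surj by blast
qed

end


lemma main27:
  fixes G :: "'a monoid" (structure)
  assumes grp: "group G" and fin: "finite (carrier G)" and c27: "card (carrier G) = 27"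
    and nc: "\<not> comm_group G"
  shows "(\<exists>a. narcissistic G a) \<and> (\<exists>a. directed_hh_terrace G a)"
proof -
  interpret group G by (rule grp)
  obtain x y z a b al be where xyz: "x \<in> carrier G" "y \<in> carrier G" "z \<in> carrier G"
    and zc: "\<forall>g\<in>carrier G. g \<otimes> z = z \<otimes> g" and z3: "z [^] (3::nat) = \<one>"
    and x3: "x [^] (3::nat) = z [^] (al::nat)" and y3: "y [^] (3::nat) = z [^] (be::nat)"
    and rel: "x \<otimes> y = y \<otimes> x [^] (a::nat) \<otimes> z [^] (b::nat)"
    and lt: "a < 3" "b < 3" "al < 3" "be < 3"
    and ncxy: "x \<otimes> y \<noteq> y \<otimes> x"
    and inj: "inj_on (phi27 G x y z) (set D27)" and surj: "phi27 G x y z ` set D27 = carrier G"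
    using struct27[OF fin _ nc] c27 unfolding order_def by blast
  let ?phi = "phi27 G x y z" and ?M = "mul27 a b al be"
  have hom: "?phi (?M p q) = ?phi p \<otimes> ?phi q" for p q
    using hom27[OF xyz zc z3 x3 y3 rel] .
  have pc: "?phi p \<in> carrier G" for p using xyz by (simp add: phi27_def split: prod.split)
  have "(a,b,al,be) \<in> set params27" using lt set_params27 by simp
  hence c: "comm27 (a,b,al,be) \<or> bad27 (a,b,al,be) \<or> good27 (a,b,al,be)"
    using check27 by (simp add: list_all_iff)
  moreover have "\<not> comm27 (a,b,al,be)"
  proof
    assume "comm27 (a,b,al,be)"
    hence "?M (0,1,0) (1,0,0) = ?M (1,0,0) (0,1,0)" unfolding comm27_def by simp
    hence "?phi (0,1,0) \<otimes> ?phi (1,0,0) = ?phi (1,0,0) \<otimes> ?phi (0,1,0)" using hom by metis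
    moreover have "?phi (0,1,0) = x" "?phi (1,0,0) = y" using xyz by (simp_all add: phi27_def)
    ultimately show False using ncxy by simp
  qed
  moreover have "\<not> bad27 (a,b,al,be)"
  proof
    assume bd: "bad27 (a,b,al,be)"
    then obtain p q r where w: "wit27 (a,b,al,be) = Some (p,q,r)"
      unfolding bad27_def by (auto split: option.splits)
    hence cond: "?M (?M p q) r \<in> set D27" "?M p (?M q r) \<in> set D27" "?M (?M p q) r \<noteq> ?M p (?M q r)"
      using bd unfolding bad27_def by auto
    have "?phi (?M (?M p q) r) = ?phi (?M p (?M q r))" using hom pc by (simp add: m_assoc)
    thus False using inj cond unfolding inj_on_def by blast
  qed
  ultimately have g: "good27 (a,b,al,be)" by simp
  then obtain ivt L1 Q1 L2 Q2 where d: "dat27 (a,b,al,be) = Some (ivt, L1, Q1, L2, Q2)"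
    unfolding good27_def by (auto split: option.splits)
  let ?iv = "\<lambda>p. the (map_of ivt p)"
  have chk: "cinvok D27 ?M (0,0,0) ?iv" "cnarc D27 (0,0,0) ?iv L1 Q1" "cquot ?M ?iv L1 = Q1"
    "cdhh D27 (0,0,0) ?iv L2 Q2" "cquot ?M ?iv L2 = Q2"
    using g d unfolding good27_def by (simp_all add: Let_def)
  interpret MH: model_hom G D27 ?M "(0,0,0)" ?iv ?phi
    by (unfold_locales) (use grp chk(1) hom inj surj in auto)
  have "narcissistic G (map ?phi L1)" using MH.narc[OF chk(2) chk(3)] .
  moreover have "directed_hh_terrace G (map ?phi L2)" using MH.dhh[OF chk(4) chk(5)] .
  ultimately show ?thesis by blast
qed

lemma main39:
  fixes G :: "'a monoid" (structure)
  assumes grp: "group G" and fin: "finite (carrier G)" and c39: "card (carrier G) = 39"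
    and nc: "\<not> comm_group G"
  shows "\<exists>a. directed_hh_terrace G a"
proof -
  interpret group G by (rule grp)
  obtain x y r where xy: "x \<in> carrier G" "y \<in> carrier G" and x13: "x [^] (13::nat) = \<one>"
    and y3: "y [^] (3::nat) = \<one>" and rel: "x \<otimes> y = y \<otimes> x [^] (r::nat)" and r: "r < 13" "r \<noteq> 1"
    and inj: "inj_on (phi39 G x y) (set D39)" and surj: "phi39 G x y ` set D39 = carrier G"
    using struct39[OF fin _ nc] c39 unfolding order_def by blast
  let ?phi = "phi39 G x y" and ?M = "mul39 r"
  have hom: "?phi (?M p q) = ?phi p \<otimes> ?phi q" for p q
    using hom39[OF xy x13 y3 rel] .
  have pc: "?phi p \<in> carrier G" for p using xy by (simp add: phi39_def split: prod.split)
  have "r \<in> set [0..<13]" using r by simp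
  hence c: "r = 1 \<or> bad39 r \<or> good39 r" using check39 by (simp add: list_all_iff)
  moreover have "\<not> bad39 r"
  proof
    assume bd: "bad39 r"
    then obtain p q s where w: "wit39 r = Some (p,q,s)"
      unfolding bad39_def by (auto split: option.splits)
    hence cond: "?M (?M p q) s \<in> set D39" "?M p (?M q s) \<in> set D39" "?M (?M p q) s \<noteq> ?M p (?M q s)"
      using bd unfolding bad39_def by auto
    have "?phi (?M (?M p q) s) = ?phi (?M p (?M q s))" using hom pc by (simp add: m_assoc)
    thus False using inj cond unfolding inj_on_def by blast
  qed
  ultimately have g: "good39 r" using r by simp
  then obtain ivt L Q where d: "dat39 r = Some (ivt, L, Q)"
    unfolding good39_def by (auto split: option.splits)
  let ?iv = "\<lambda>p. the (map_of ivt p)"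
  have chk: "cinvok D39 ?M (0,0) ?iv" "cdhh D39 (0,0) ?iv L Q" "cquot ?M ?iv L = Q"
    using g d unfolding good39_def by (simp_all add: Let_def)
  interpret MH: model_hom G D39 ?M "(0,0)" ?iv ?phi
    by (unfold_locales) (use grp chk(1) hom inj surj in auto)
  have "directed_hh_terrace G (map ?phi L)" using MH.dhh[OF chk(2) chk(3)] .
  thus ?thesis by blast
qed

theorem theorem11:
  fixes G :: "'a monoid" and H :: "'b monoid"
  shows "(group G \<and> finite (carrier G) \<and> card (carrier G) = 27 \<and> \<not> comm_group G \<longrightarrow>
            (\<exists>a. narcissistic G a) \<and> (\<exists>a. directed_hh_terrace G a))
       \<and> (group H \<and> finite (carrier H) \<and> card (carrier H) = 39 \<and> \<not> comm_group H \<longrightarrow>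
            (\<exists>a. directed_hh_terrace H a))"
  using main27[of G] main39[of H] by blast

end
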